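(* Let $\varepsilon\in\{-1,1\}$, $\nu>0$, $t>a>0$, and let $f\in C((0,\infty);L^1(\mathbb{R}^2))$ with $\partial_y^2 f\in C((0,\infty);L^1(\mathbb{R}^2))$. Then there is a constant $C>0$ (independent of $a,t,f$) such that $$\Big\|\int_a^t S(t-\tau)*f(\tau)\,d\tau\Big\|_{L^\infty}\le C\sqrt t\sup_{a\le\tau\le t}\big(\|f(\cdot,\cdot,\tau)\|_{L^1}+\|\partial_y^2f(\cdot,\cdot,\tau)\|_{L^1}\big),$$ $$\Big\|\int_a^t K(t-\tau)*f(\tau)\,d\tau\Big\|_{L^\infty}\le C\sqrt t\sup_{a\le\tau\le t}\big(\|f(\cdot,\cdot,\tau)\|_{L^1}+\|\partial_y^2f(\cdot,\cdot,\tau)\|_{L^1}\big).$$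
   Context: Fourier transform on $\mathbb{R}^2$: $\hat f(\xi,\eta)=\frac{1}{2\pi}\int_{\mathbb{R}^2}e^{-ix\xi-iy\eta}f\,dx\,dy$, inverse $\mathcal{F}^{-1}[g](x,y)=\frac{1}{2\pi}\int e^{ix\xi+iy\eta}g\,d\xi\,d\eta$. Convolution is in $(x,y)$. $S(x,y,t):=\mathcal{F}^{-1}\big[\frac{1}{2\pi}e^{-\nu t\xi^2+it(\xi^3-\varepsilon\eta^2/\xi)}\big](x,y)$; $K(x,y,t):=\mathcal{F}^{-1}\big[\frac{1}{2\pi}e^{-\nu t\xi^2-it\varepsilon\eta^2/\xi}\big](x,y)$, which equals $t^{-5/4}K_*(xt^{-1/2},yt^{-3/4})$ with $K_*(x,y):=\frac{1}{4\pi^{3/2}\nu^{3/4}}\int_0^\infty r^{-1/4}e^{-r}\cos\big(x\sqrt{r/\nu}+\frac{y^2}{4\varepsilon}\sqrt{r/\nu}-\frac{\pi}{4}\varepsilon\big)dr$. *)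

theory Defs
  imports "HOL-Analysis.Analysis"
begin

definition Kstar :: "real \<Rightarrow> real \<Rightarrow> real \<Rightarrow> real \<Rightarrow> real" where
  "Kstar eps nu x y = 1 / (4 * pi powr (3/2) * nu powr (3/4)) *
     (LBINT r:{0<..}. r powr (-1/4) * exp (-r) *
        cos (x * sqrt (r / nu) + y^2 / (4 * eps) * sqrt (r / nu) - pi / 4 * eps))"

definition Kker :: "real \<Rightarrow> real \<Rightarrow> real \<Rightarrow> real \<Rightarrow> real \<Rightarrow> real" where
  "Kker eps nu x y t = t powr (-5/4) * Kstar eps nu (x * t powr (-1/2)) (y * t powr (-3/4))"

text \<open>S(x,y,t): the inverse Fourier transform of (1/2pi) exp(-nu t xi^2 + i t (xi^3 - eps eta^2/xi)),
  with the (Fresnel) eta-integral evaluated explicitly and the remaining xi-integral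
  written in real form (the kernel is real).\<close>
definition Sker :: "real \<Rightarrow> real \<Rightarrow> real \<Rightarrow> real \<Rightarrow> real \<Rightarrow> real" where
  "Sker eps nu x y t = 1 / (2 * pi powr (3/2) * sqrt t) *
     (LBINT \<xi>:{0<..}. sqrt \<xi> * exp (- nu * t * \<xi>^2) *
        cos (\<xi> * x + t * \<xi>^3 + y^2 * \<xi> / (4 * eps * t) - pi / 4 * eps))"

definition L1norm :: "(real \<times> real \<Rightarrow> real) \<Rightarrow> real" where
  "L1norm h = (\<integral>z. \<bar>h z\<bar> \<partial>lborel)"

definition L1_cont :: "(real \<Rightarrow> real \<times> real \<Rightarrow> real) \<Rightarrow> bool" where
  "L1_cont f \<longleftrightarrow> (\<forall>\<tau>>0. integrable lborel (f \<tau>)) \<and>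
     (\<forall>\<tau>0>0. ((\<lambda>\<tau>. L1norm (\<lambda>z. f \<tau> z - f \<tau>0 z)) \<longlongrightarrow> 0) (at \<tau>0 within {0<..}))"

text \<open>g is the weak (distributional) derivative \<partial>_y^2 h: tested against compactly supported
  continuous \<phi> which are C^2 in y with continuous \<partial>_y \<phi> = \<phi>1, \<partial>_y^2 \<phi> = \<phi>2
  (equivalent to testing with C_c^\<infinity> by mollification).\<close>
definition weak_dyy :: "(real \<times> real \<Rightarrow> real) \<Rightarrow> (real \<times> real \<Rightarrow> real) \<Rightarrow> bool" where
  "weak_dyy h g \<longleftrightarrow>
    (\<forall>\<phi> \<phi>1 \<phi>2. continuous_on UNIV \<phi> \<and> continuous_on UNIV \<phi>1 \<and> continuous_on UNIV \<phi>2 \<and>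
        bounded {z. \<phi> z \<noteq> 0} \<and>
        (\<forall>x y. ((\<lambda>s. \<phi> (x, s)) has_real_derivative \<phi>1 (x, y)) (at y)) \<and>
        (\<forall>x y. ((\<lambda>s. \<phi>1 (x, s)) has_real_derivative \<phi>2 (x, y)) (at y))
      \<longrightarrow> (\<integral>z. h z * \<phi>2 z \<partial>lborel) = (\<integral>z. g z * \<phi> z \<partial>lborel))"

definition duhamel :: "(real \<Rightarrow> real \<Rightarrow> real \<Rightarrow> real) \<Rightarrow> (real \<Rightarrow> real \<times> real \<Rightarrow> real)
    \<Rightarrow> real \<Rightarrow> real \<Rightarrow> real \<times> real \<Rightarrow> real" where
  "duhamel Ker f a t z = (LBINT \<tau>:{a..t}.
      (\<integral>w. Ker (fst z - fst w) (snd z - snd w) (t - \<tau>) * f \<tau> w \<partial>lborel))"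

end

theory Submission
  imports Defs "HOL-Probability.Distributions"
begin

lemma mvt_abs_bound:
  fixes f f' :: "real \<Rightarrow> real"
  assumes der: "\<And>x. min u v \<le> x \<Longrightarrow> x \<le> max u v \<Longrightarrow> DERIV f x :> f' x"
    and bnd: "\<And>x. min u v \<le> x \<Longrightarrow> x \<le> max u v \<Longrightarrow> \<bar>f' x\<bar> \<le> K"
  shows "\<bar>f v - f u\<bar> \<le> K * \<bar>v - u\<bar>"
proof (cases u v rule: linorder_cases)
  case less
  then obtain z where z: "u < z" "z < v" "f v - f u = (v - u) * f' z"
    using MVT2[of u v f f'] der by (auto simp: min_def max_def)
  have "\<bar>f' z\<bar> \<le> K" using bnd z less by (auto simp: min_def max_def)
  then show ?thesis using z less by (simp add: abs_mult mult.commute mult_right_mono)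
next
  case greater
  then obtain z where z: "v < z" "z < u" "f u - f v = (u - v) * f' z"
    using MVT2[of v u f f'] der by (auto simp: min_def max_def)
  have "\<bar>f' z\<bar> \<le> K" using bnd z greater by (auto simp: min_def max_def)
  then show ?thesis using z greater by (simp add: abs_mult mult.commute mult_right_mono abs_minus_commute)
qed simp

lemma mono_sandwich:
  fixes F G F' G' :: "real \<Rightarrow> real"
  assumes "u \<le> v"
    and dF: "\<And>x. u \<le> x \<Longrightarrow> x \<le> v \<Longrightarrow> DERIV F x :> F' x"
    and dG: "\<And>x. u \<le> x \<Longrightarrow> x \<le> v \<Longrightarrow> DERIV G x :> G' x"
    and b: "\<And>x. u \<le> x \<Longrightarrow> x \<le> v \<Longrightarrow> \<bar>F' x\<bar> \<le> G' x"
  shows "\<bar>F v - F u\<bar> \<le> G v - G u"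
proof -
  have 1: "(\<lambda>x. G x + F x) u \<le> (\<lambda>x. G x + F x) v"
    apply (rule DERIV_nonneg_imp_nondecreasing[OF assms(1)])
    subgoal for x using dF[of x] dG[of x] b[of x] by (intro exI[of _ "G' x + F' x"]) (auto intro: derivative_intros)
    done
  have 2: "(\<lambda>x. G x - F x) u \<le> (\<lambda>x. G x - F x) v"
    apply (rule DERIV_nonneg_imp_nondecreasing[OF assms(1)])
    subgoal for x using dF[of x] dG[of x] b[of x] by (intro exI[of _ "G' x - F' x"]) (auto intro: derivative_intros)
    done
  show ?thesis using 1 2 by simp
qed

lemma fresnel_outer:
  fixes B :: "real \<Rightarrow> real" and l th u v :: real
  assumes l: "l > 0"
    and dB: "\<And>w. (B has_real_derivative cos (l * w\<^sup>2 + th)) (at w)"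
    and uv: "(1 / sqrt l \<le> u \<and> u \<le> v) \<or> (u \<le> v \<and> v \<le> - (1 / sqrt l))"
  shows "\<bar>B v - B u\<bar> \<le> 3 / (2 * sqrt l)"
proof -
  define T where "T = 1 / sqrt l"
  have T: "T > 0" using l by (simp add: T_def)
  have lT: "l * T = sqrt l" using l by (simp add: T_def field_simps real_sqrt_mult[symmetric] flip: power2_eq_square)
  define E where "E w = sin (l * w\<^sup>2 + th) / (2 * l * w)" for w
  define G where "G w = - 1 / (2 * l * w)" for w
  have Tw: "T \<le> \<bar>w\<bar>" if "u \<le> w" "w \<le> v" for w using uv that T_def by auto
  have w0: "w \<noteq> 0" if "u \<le> w" "w \<le> v" for w using Tw[OF that] T by auto
  have dE: "DERIV E w :> cos (l * w\<^sup>2 + th) - sin (l * w\<^sup>2 + th) / (2 * l * w\<^sup>2)" if "w \<noteq> 0" for w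
  proof -
    have "DERIV E w :> (cos (l * w\<^sup>2 + th) * (l * (2 * w)) * (2 * l * w) - sin (l * w\<^sup>2 + th) * (2 * l)) / (2 * l * w)\<^sup>2"
      unfolding E_def using that l
      by (auto intro!: derivative_eq_intros simp: power2_eq_square algebra_simps)
    moreover have "(cos (l * w\<^sup>2 + th) * (l * (2 * w)) * (2 * l * w) - sin (l * w\<^sup>2 + th) * (2 * l)) / (2 * l * w)\<^sup>2
       = cos (l * w\<^sup>2 + th) - sin (l * w\<^sup>2 + th) / (2 * l * w\<^sup>2)"
      using that l by (simp add: field_simps power2_eq_square)
    ultimately show ?thesis by simp
  qed
  have dG: "DERIV G w :> 1 / (2 * l * w\<^sup>2)" if "w \<noteq> 0" for w
    unfolding G_def using that l by (auto intro!: derivative_eq_intros simp: power2_eq_square field_simps)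
  have main: "\<bar>(B v - E v) - (B u - E u)\<bar> \<le> G v - G u"
  proof (rule mono_sandwich[where F="\<lambda>w. B w - E w" and F'="\<lambda>w. sin (l * w\<^sup>2 + th) / (2 * l * w\<^sup>2)"
        and G'="\<lambda>w. 1 / (2 * l * w\<^sup>2)"])
    show "u \<le> v" using uv by auto
    fix x assume x: "u \<le> x" "x \<le> v"
    show "DERIV (\<lambda>w. B w - E w) x :> sin (l * x\<^sup>2 + th) / (2 * l * x\<^sup>2)"
      using DERIV_diff[OF dB dE[OF w0[OF x]]] by simp
    show "DERIV G x :> 1 / (2 * l * x\<^sup>2)" using dG[OF w0[OF x]] .
    have "\<bar>sin (l * x\<^sup>2 + th)\<bar> / (2 * l * x\<^sup>2) \<le> 1 / (2 * l * x\<^sup>2)"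
      using l w0[OF x] by (intro divide_right_mono) auto
    then show "\<bar>sin (l * x\<^sup>2 + th) / (2 * l * x\<^sup>2)\<bar> \<le> 1 / (2 * l * x\<^sup>2)"
      using l by (simp add: abs_divide)
  qed
  have Gb: "G v - G u \<le> 1 / (2 * sqrt l)"
  proof -
    have "G v - G u = (1 / u - 1 / v) / (2 * l)" unfolding G_def using w0[of u] w0[of v] uv l
      by (auto simp: field_simps)
    moreover have "\<bar>1 / u - 1 / v\<bar> \<le> 1 / T"
    proof -
      have "\<bar>1/u\<bar> \<le> 1/T" "\<bar>1/v\<bar> \<le> 1/T" using Tw[of u] Tw[of v] uv T
        by (auto simp: abs_divide intro!: divide_left_mono)
      moreover have "(1/u \<ge> 0 \<and> 1/v \<ge> 0) \<or> (1/u \<le> 0 \<and> 1/v \<le> 0)" proof -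
        have "(T \<le> u \<and> u \<le> v) \<or> (u \<le> v \<and> v \<le> -T)" using uv T_def by simp
        then show ?thesis using T by auto
      qed
      moreover have "\<And>a b c::real. \<bar>a\<bar> \<le> c \<Longrightarrow> \<bar>b\<bar> \<le> c \<Longrightarrow> (a\<ge>0\<and>b\<ge>0)\<or>(a\<le>0\<and>b\<le>0) \<Longrightarrow> \<bar>a-b\<bar> \<le> c"
        by linarith
      ultimately show ?thesis by blast
    qed
    ultimately have "G v - G u \<le> (1 / T) / (2 * l)" using l
      by (metis abs_le_D1 divide_right_mono mult_pos_pos zero_less_numeral less_imp_le)
    also have "\<dots> = 1 / (2 * sqrt l)" using lT T l by (simp add: field_simps)
    finally show ?thesis .
  qed
  have Eb: "\<bar>E w\<bar> \<le> 1 / (2 * sqrt l)" if "u \<le> w" "w \<le> v" for w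
  proof -
    have "\<bar>E w\<bar> = \<bar>sin (l * w\<^sup>2 + th)\<bar> / (2 * l * \<bar>w\<bar>)" unfolding E_def using l by (simp add: abs_divide abs_mult)
    also have "\<dots> \<le> 1 / (2 * l * \<bar>w\<bar>)" using l w0[OF that] by (intro divide_right_mono) auto
    also have "\<dots> \<le> 1 / (2 * l * T)" using l T Tw[OF that] by (intro divide_left_mono mult_mono) auto
    also have "\<dots> = 1 / (2 * sqrt l)" using lT by (simp add: mult.assoc)
    finally show ?thesis .
  qed
  have "\<bar>B v - B u\<bar> \<le> \<bar>(B v - E v) - (B u - E u)\<bar> + \<bar>E v\<bar> + \<bar>E u\<bar>" by linarith
  also have "\<dots> \<le> 1 / (2 * sqrt l) + 1 / (2 * sqrt l) + 1 / (2 * sqrt l)"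
    using main Gb Eb[of v] Eb[of u] uv by (intro add_mono) auto
  finally show ?thesis by simp
qed

lemma fresnel_bound:
  fixes B :: "real \<Rightarrow> real" and l th u v :: real
  assumes l: "l > 0"
    and dB: "\<And>w. (B has_real_derivative cos (l * w\<^sup>2 + th)) (at w)"
  shows "\<bar>B v - B u\<bar> \<le> 5 / sqrt l"
proof -
  define T where "T = 1 / sqrt l"
  have T: "T > 0" using l by (simp add: T_def)
  define c where "c w = max (-T) (min T w)" for w
  have side: "\<bar>B w - B (c w)\<bar> \<le> 3 / (2 * sqrt l)" for w
  proof -
    consider "w \<ge> T" | "w \<le> -T" | "-T < w \<and> w < T" by linarith
    then show ?thesis
    proof cases
      case 1
      then have "c w = T" using T by (simp add: c_def)
      then show ?thesis using fresnel_outer[OF l dB, of T w] 1 T_def by simp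
    next
      case 2
      then have "c w = -T" using T by (simp add: c_def)
      then show ?thesis using fresnel_outer[OF l dB, of w "-T"] 2 T_def by (simp add: abs_minus_commute)
    next
      case 3
      then have "c w = w" by (simp add: c_def)
      then show ?thesis using l by simp
    qed
  qed
  have mid: "\<bar>B (c v) - B (c u)\<bar> \<le> 1 * \<bar>c v - c u\<bar>"
    by (rule mvt_abs_bound[where f'="\<lambda>w. cos (l * w\<^sup>2 + th)"]) (use dB in auto)
  have "\<bar>c v - c u\<bar> \<le> 2 * T" unfolding c_def using T by (simp add: max_def min_def abs_if)
  then have mid2: "\<bar>B (c v) - B (c u)\<bar> \<le> 2 / sqrt l" using mid T_def by simp
  have "\<bar>B v - B u\<bar> \<le> \<bar>B v - B (c v)\<bar> + \<bar>B (c v) - B (c u)\<bar> + \<bar>B u - B (c u)\<bar>" by linarith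
  also have "\<dots> \<le> 3 / (2 * sqrt l) + 2 / sqrt l + 3 / (2 * sqrt l)"
    using side[of v] side[of u] mid2 by linarith
  also have "\<dots> = 5 / sqrt l" by (simp add: field_simps)
  finally show ?thesis .
qed

lemma antideriv:
  fixes f :: "real \<Rightarrow> real"
  assumes "continuous_on UNIV f"
  obtains F where "\<And>x. (F has_real_derivative f x) (at x)"
proof -
  have "\<exists>F. \<forall>x :: real. -\<infinity> < ereal x \<longrightarrow> ereal x < \<infinity> \<longrightarrow> (F has_vector_derivative f x) (at x)"
    by (rule einterval_antiderivative) (use assms in \<open>auto intro: continuous_on_interior\<close>)
  then show ?thesis using that by (auto simp: has_real_derivative_iff_has_vector_derivative)
qed

lemma deriv_cont:
  fixes F f :: "real \<Rightarrow> real"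
  assumes "\<And>x. (F has_real_derivative f x) (at x)"
  shows "continuous_on UNIV F"
  using assms by (meson DERIV_isCont continuous_at_imp_continuous_on)

lemma Qconstr:
  fixes l th :: real
  assumes l: "l > 0"
  shows "\<exists>Q Q1 R. (\<forall>v. (Q has_real_derivative Q1 v) (at v)) \<and>
     (\<forall>v. (Q1 has_real_derivative (cos (l * v\<^sup>2 + th) - R v)) (at v)) \<and>
     continuous_on UNIV R \<and> (\<forall>v. \<bar>R v\<bar> \<le> 5 / sqrt l) \<and> (\<forall>v. \<bar>Q v\<bar> \<le> 5 / sqrt l) \<and>
     (\<forall>v. \<bar>Q1 v\<bar> \<le> 5 / sqrt l)"
proof -
  have "continuous_on UNIV (\<lambda>w. cos (l * w\<^sup>2 + th))" by (intro continuous_intros)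
  then obtain B where dB: "\<And>w. (B has_real_derivative cos (l * w\<^sup>2 + th)) (at w)"
    using antideriv by blast
  have cB: "continuous_on UNIV B" using deriv_cont[OF dB] .
  obtain B1 where dB1: "\<And>w. (B1 has_real_derivative B w) (at w)" using antideriv[OF cB] by blast
  have "continuous_on UNIV (\<lambda>w. w * B w)" using cB by (intro continuous_intros) auto
  then obtain C1 where dC1: "\<And>w. (C1 has_real_derivative w * B w) (at w)" using antideriv by blast
  have Bb: "\<bar>B v - B u\<bar> \<le> 5 / sqrt l" for u v using fresnel_bound[OF l dB] .
  define R where "R v = (B (v+1) - B (v-1)) / 2" for v
  define Q1 where "Q1 v = B v - (B1 (v+1) - B1 (v-1)) / 2" for v
  define Q where "Q v = ((1-v) * (B1 v - B1 (v-1)) + C1 v - C1 (v-1) - (1+v) * (B1 (v+1) - B1 v)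
      + C1 (v+1) - C1 v) / 2" for v
  have dQ: "(Q has_real_derivative Q1 v) (at v)" for v
  proof -
    have "(Q has_real_derivative ((- 1) * (B1 v - B1 (v-1)) + (1-v) * (B v - B (v-1)) + v * B v - (v-1) * B (v-1)
       - (1 * (B1 (v+1) - B1 v) + (1+v) * (B (v+1) - B v)) + (v+1) * B (v+1) - v * B v) / 2) (at v)"
      unfolding Q_def
      by (auto intro!: derivative_eq_intros DERIV_chain2[OF dB1] DERIV_chain2[OF dC1] dB1 dC1)
    moreover have "((- 1) * (B1 v - B1 (v-1)) + (1-v) * (B v - B (v-1)) + v * B v - (v-1) * B (v-1)
       - (1 * (B1 (v+1) - B1 v) + (1+v) * (B (v+1) - B v)) + (v+1) * B (v+1) - v * B v) / 2 = Q1 v"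
      unfolding Q1_def by (simp add: field_simps)
    ultimately show ?thesis by simp
  qed
  have dQ1: "(Q1 has_real_derivative (cos (l * v\<^sup>2 + th) - R v)) (at v)" for v
    unfolding Q1_def R_def
    by (auto intro!: derivative_eq_intros DERIV_chain2[OF dB1] dB1 dB)
  have cR: "continuous_on UNIV R" unfolding R_def
    by (intro continuous_intros continuous_on_compose2[OF cB]) auto
  have bR: "\<bar>R v\<bar> \<le> 5 / sqrt l" for v
  proof -
    have "\<bar>R v\<bar> = \<bar>B (v+1) - B (v-1)\<bar> / 2" by (simp add: R_def)
    also have "\<dots> \<le> (5 / sqrt l) / 2" using Bb by (intro divide_right_mono) auto
    also have "\<dots> \<le> 5 / sqrt l" using l by (simp add: field_simps)
    finally show ?thesis .
  qed
  have bQ1: "\<bar>Q1 v\<bar> \<le> 5 / sqrt l" for v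
  proof -
    obtain z where z: "v - 1 < z" "z < v + 1" "B1 (v+1) - B1 (v-1) = ((v+1) - (v-1)) * B z"
      using MVT2[of "v-1" "v+1" B1 B] dB1 by auto
    have "Q1 v = B v - B z" using z by (simp add: Q1_def)
    then show ?thesis using Bb by simp
  qed
  have bQ: "\<bar>Q v\<bar> \<le> 5 / sqrt l" for v
  proof -
    define U where "U u = - (1-v) * B1 (v-u) - C1 (v-u) - (1+v) * B1 (v+u) + C1 (v+u)" for u
    have dU: "DERIV U u :> (1-u) * (B (v-u) - B (v+u))" for u
    proof -
      have "DERIV U u :> - (1-v) * (B (v-u) * (0 - 1)) - ((v-u) * B (v-u) * (0 - 1)) - (1+v) * (B (v+u) * (0+1)) + (v+u) * B (v+u) * (0 + 1)"
        unfolding U_def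
        by (auto intro!: derivative_eq_intros DERIV_chain2[OF dB1] DERIV_chain2[OF dC1])
      then show ?thesis by (simp add: algebra_simps)
    qed
    have "\<bar>U 1 - U 0\<bar> \<le> (5 / sqrt l) * \<bar>1 - 0\<bar>"
    proof (rule mvt_abs_bound[OF dU])
      fix u :: real assume u: "min 0 1 \<le> u" "u \<le> max 0 1"
      have "\<bar>(1-u) * (B (v-u) - B (v+u))\<bar> = (1-u) * \<bar>B (v-u) - B (v+u)\<bar>" using u by (simp add: abs_mult)
      also have "\<dots> \<le> 1 * (5 / sqrt l)" using u Bb[of "v+u" "v-u"] by (intro mult_mono) auto
      finally show "\<bar>(1-u) * (B (v-u) - B (v+u))\<bar> \<le> 5 / sqrt l" by simp
    qed
    moreover have "Q v = (U 1 - U 0) / 2" unfolding Q_def U_def by (simp add: algebra_simps)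
    ultimately have "\<bar>Q v\<bar> \<le> (5 / sqrt l) / 2" by simp
    also have "\<dots> \<le> 5 / sqrt l" using l by (simp add: field_simps)
    finally show ?thesis .
  qed
  show ?thesis using dQ dQ1 cR bR bQ bQ1 by blast
qed

lemma dpow_pos:
  fixes n :: nat and x :: real
  assumes n: "n \<ge> 2"
  shows "DERIV (\<lambda>u. (max 0 u) ^ n) x :> real n * (max 0 x) ^ (n - 1)"
proof (cases x "0::real" rule: linorder_cases)
  case less
  have ev: "\<forall>\<^sub>F u in nhds x. (max 0 u) ^ n = (0::real)"
    using eventually_nhds_in_open[of "{..<0}" x] less n
    by (auto elim!: eventually_mono simp: max_def)
  have e: "real n * (max 0 x) ^ (n - 1) = 0" using less n by simp
  show ?thesis unfolding e
    by (subst DERIV_cong_ev[OF refl ev refl]) (rule DERIV_const)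
next
  case greater
  have ev: "\<forall>\<^sub>F u in nhds x. (max 0 u) ^ n = u ^ n"
    using eventually_nhds_in_open[of "{0<..}" x] greater
    by (auto elim!: eventually_mono simp: max_def)
  have "DERIV (\<lambda>u. u ^ n) x :> real n * x ^ (n - 1)" by (auto intro!: derivative_eq_intros)
  then show ?thesis using greater
    by (subst DERIV_cong_ev[OF refl ev refl]) (auto simp: max_def)
next
  case equal
  have lim: "(\<lambda>h. ((max 0 (0 + h)) ^ n - (max 0 0) ^ n) / h) \<midarrow>0\<rightarrow> (0::real)"
  proof (rule Lim_null_comparison)
    have "\<forall>\<^sub>F h in at (0::real). h \<in> {-1<..<1}"
      by (rule eventually_at_in_open') auto
    then show "\<forall>\<^sub>F h in at 0. norm (((max 0 (0 + h)) ^ n - (max 0 0) ^ n) / h) \<le> \<bar>h\<bar>"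
    proof (rule eventually_mono)
      fix h :: real assume h: "h \<in> {-1<..<1}"
      show "norm (((max 0 (0 + h)) ^ n - (max 0 0) ^ n) / h) \<le> \<bar>h\<bar>"
      proof (cases "h > 0")
        case True
        define m where "m = n - 2"
        have m: "n = Suc (Suc m)" using n by (simp add: m_def)
        have "norm (((max 0 (0 + h)) ^ n - (max 0 0) ^ n) / h) = h * h ^ m" using True m by simp
        also have "\<dots> \<le> h * 1" using True h by (intro mult_left_mono power_le_one) auto
        finally show ?thesis using True by simp
      next
        case False
        then show ?thesis using n by simp
      qed
    qed
    show "((\<lambda>h. \<bar>h\<bar>) \<longlongrightarrow> 0) (at (0::real))"
      using tendsto_rabs[OF tendsto_ident_at[of "0::real" UNIV]] by simp
  qed
  have e: "real n * (max 0 (0::real)) ^ (n - 1) = 0" using n by simp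
  show ?thesis unfolding equal DERIV_def e by (rule lim)
qed

definition zc :: "real \<Rightarrow> real" where "zc x = (max 0 (1 - x\<^sup>2)) ^ 3"
definition zc1 :: "real \<Rightarrow> real" where "zc1 x = - 6 * x * (max 0 (1 - x\<^sup>2)) ^ 2"
definition zc2 :: "real \<Rightarrow> real" where
  "zc2 x = 24 * x\<^sup>2 * max 0 (1 - x\<^sup>2) - 6 * (max 0 (1 - x\<^sup>2)) ^ 2"

lemma dinner: "DERIV (\<lambda>x::real. 1 - x\<^sup>2) x :> 0 - 2 * x"
  by (auto intro!: derivative_eq_intros)

lemma dzc: "DERIV zc x :> zc1 x"
proof -
  have "DERIV (\<lambda>x. (max 0 (1 - x\<^sup>2)) ^ 3) x :> real 3 * (max 0 (1 - x\<^sup>2)) ^ (3 - 1) * (0 - 2 * x)"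
    by (rule DERIV_chain2[OF dpow_pos dinner]) simp
  then show ?thesis unfolding zc_def zc1_def by (simp add: algebra_simps)
qed

lemma dzc1: "DERIV zc1 x :> zc2 x"
proof -
  have d2: "DERIV (\<lambda>x. (max 0 (1 - x\<^sup>2)) ^ 2) x :> real 2 * (max 0 (1 - x\<^sup>2)) ^ (2 - 1) * (0 - 2 * x)"
    by (rule DERIV_chain2[OF dpow_pos dinner]) simp
  have d1: "DERIV (\<lambda>x::real. - 6 * x) x :> - 6" by (rule derivative_eq_intros refl)+ simp
  have "DERIV zc1 x :> - 6 * (max 0 (1 - x\<^sup>2)) ^ 2 + (- 6 * x) * (real 2 * (max 0 (1 - x\<^sup>2)) ^ (2 - 1) * (0 - 2 * x))"
    unfolding zc1_def using DERIV_mult[OF d1 d2] by (simp add: algebra_simps)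
  then show ?thesis unfolding zc2_def by (simp add: algebra_simps power2_eq_square)
qed

lemma zc_facts:
  shows "zc 0 = 1" and "\<bar>zc x\<bar> \<le> 1" and "\<bar>zc1 x\<bar> \<le> 6" and "\<bar>zc2 x\<bar> \<le> 30"
    and "zc x \<noteq> 0 \<Longrightarrow> \<bar>x\<bar> < 1"
    and "continuous_on UNIV zc" and "continuous_on UNIV zc1" and "continuous_on UNIV zc2"
proof -
  define m where "m = max 0 (1 - x\<^sup>2)"
  have m0: "0 \<le> m" and m1: "m \<le> 1" unfolding m_def by auto
  have xm: "x\<^sup>2 * m \<le> 1"
  proof (cases "x\<^sup>2 \<le> 1")
    case True then show ?thesis using m0 m1 mult_mono[OF True m1] by simp
  next
    case False then have "m = 0" unfolding m_def by auto
    then show ?thesis by simp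
  qed
  have axm: "\<bar>x\<bar> * m \<le> 1"
  proof (cases "\<bar>x\<bar> \<le> 1")
    case True then show ?thesis using m0 m1 mult_mono[OF True m1] by simp
  next
    case False then have "x\<^sup>2 > 1" using abs_square_le_1[of x] by linarith
    then have "m = 0" unfolding m_def by auto
    then show ?thesis by simp
  qed
  show "zc 0 = 1" by (simp add: zc_def)
  show "\<bar>zc x\<bar> \<le> 1" unfolding zc_def m_def[symmetric] using m0 m1 by (simp add: power_le_one)
  have "\<bar>zc1 x\<bar> = 6 * (\<bar>x\<bar> * m) * m" unfolding zc1_def m_def[symmetric] using m0
    by (simp add: abs_mult power2_eq_square)
  also have "\<dots> \<le> 6 * 1 * 1" using axm m0 m1 by (intro mult_mono) auto
  finally show "\<bar>zc1 x\<bar> \<le> 6" by simp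
  have "\<bar>zc2 x\<bar> \<le> \<bar>24 * x\<^sup>2 * m\<bar> + \<bar>6 * m ^ 2\<bar>" unfolding zc2_def m_def[symmetric]
    by (rule abs_triangle_ineq4)
  also have "\<dots> = 24 * (x\<^sup>2 * m) + 6 * (m * m)" using m0 by (simp add: abs_mult power2_eq_square)
  also have "\<dots> \<le> 24 * 1 + 6 * (1 * 1)" using xm m0 m1 by (intro add_mono mult_left_mono mult_mono) auto
  finally show "\<bar>zc2 x\<bar> \<le> 30" by simp
  show "\<bar>x\<bar> < 1" if "zc x \<noteq> 0"
  proof (rule ccontr)
    assume "\<not> \<bar>x\<bar> < 1"
    then have "x\<^sup>2 \<ge> 1" using abs_square_less_1[of x] by linarith
    then have "m = 0" unfolding m_def by auto
    then show False using that unfolding zc_def m_def[symmetric] by simp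
  qed
  have cm: "continuous_on UNIV (\<lambda>x::real. max 0 (1 - x\<^sup>2))" by (intro continuous_intros)
  show "continuous_on UNIV zc" unfolding zc_def by (intro continuous_intros cm)
  show "continuous_on UNIV zc1" unfolding zc1_def by (intro continuous_intros cm)
  show "continuous_on UNIV zc2" unfolding zc2_def by (intro continuous_intros cm)
qed

lemma m4: "\<bar>u\<bar> \<le> U \<Longrightarrow> \<bar>v\<bar> \<le> 1 \<Longrightarrow> \<bar>w\<bar> \<le> 1 \<Longrightarrow> \<bar>q\<bar> \<le> K \<Longrightarrow> \<bar>(u::real) * v * w * q\<bar> \<le> U * K"
proof -
  assume a: "\<bar>u\<bar> \<le> U" "\<bar>v\<bar> \<le> 1" "\<bar>w\<bar> \<le> 1" "\<bar>q\<bar> \<le> K"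
  have "\<bar>u * v * w * q\<bar> = \<bar>u\<bar> * \<bar>v\<bar> * \<bar>w\<bar> * \<bar>q\<bar>" by (simp add: abs_mult)
  also have "\<dots> \<le> U * 1 * 1 * K" using a by (intro mult_mono) auto
  finally show ?thesis by simp
qed
lemma tri3:
  assumes "\<bar>A\<bar> \<le> a" "\<bar>B\<bar> \<le> b" "\<bar>C\<bar> \<le> c"
  shows "\<bar>A + 2 * B + C\<bar> \<le> a + 2 * b + (c::real)"
  using assms unfolding abs_le_iff by linarith

lemma bnd3:
  fixes a1 a2 u1 u2 u3 c q q1 b r K :: real
  assumes "\<bar>a1\<bar> \<le> 1" "\<bar>a2\<bar> \<le> 1" "\<bar>u1\<bar> \<le> 30" "\<bar>u2\<bar> \<le> 6" "\<bar>u3\<bar> \<le> 1" "0 < c" "c \<le> 1"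
    "\<bar>q\<bar> \<le> K" "\<bar>q1\<bar> \<le> K" "\<bar>b\<bar> \<le> 1" "\<bar>r\<bar> \<le> K"
  shows "\<bar>a1 * a2 * (u1 * c * c * q + 2 * (u2 * c * q1) + u3 * (b - r))\<bar> \<le> 43 * K + 1"
proof -
  have cc: "\<bar>c\<bar> \<le> 1" using assms(6,7) by simp
  have 1: "\<bar>u1 * c * c * q\<bar> \<le> 30 * K" by (rule m4[OF assms(3) cc cc assms(8)])
  have 2: "\<bar>u2 * c * 1 * q1\<bar> \<le> 6 * K" by (rule m4[OF assms(4) cc _ assms(9)]) simp
  have br: "\<bar>b - r\<bar> \<le> 1 + K" using assms(10,11) by (simp add: abs_le_iff) 
  have 3: "\<bar>u3 * 1 * 1 * (b - r)\<bar> \<le> 1 * (1 + K)" by (rule m4[OF assms(5) _ _ br]) simp_all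
  have X: "\<bar>u1 * c * c * q + 2 * (u2 * c * q1) + u3 * (b - r)\<bar> \<le> 43 * K + 1"
    using tri3[OF 1 2 3] by simp
  have a12: "\<bar>a1 * a2\<bar> \<le> 1" unfolding abs_mult by (rule mult_le_one[OF assms(1) _ assms(2)]) simp
  have "\<bar>a1 * a2 * (u1 * c * c * q + 2 * (u2 * c * q1) + u3 * (b - r))\<bar>
     = \<bar>a1 * a2\<bar> * \<bar>u1 * c * c * q + 2 * (u2 * c * q1) + u3 * (b - r)\<bar>" by (rule abs_mult)
  also have "\<dots> \<le> 1 * (43 * K + 1)" by (rule mult_mono[OF a12 X]) auto
  finally show ?thesis by simp
qed

lemma cont_comp_UNIV: "continuous_on UNIV g \<Longrightarrow> continuous_on S f \<Longrightarrow> continuous_on S (\<lambda>x. g (f x))"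
  by (metis continuous_on_compose2 subset_UNIV)

lemma dscale:
  assumes "DERIV g (y * a) :> g'" shows "DERIV (\<lambda>s. g (s * a)) y :> g' * a"
proof -
  have "DERIV (\<lambda>s. s * a) y :> a" by (auto intro!: derivative_eq_intros)
  from DERIV_chain2[OF assms this] show ?thesis .
qed

lemma dshift:
  assumes "DERIV g (y - y0) :> g'" shows "DERIV (\<lambda>s. g (s - y0)) y :> g'"
proof -
  have "DERIV (\<lambda>s. s - y0) y :> 1" by (auto intro!: derivative_eq_intros)
  from DERIV_chain2[OF assms this] show ?thesis by simp
qed

lemma transfer:
  fixes F G :: "real \<times> real \<Rightarrow> real" and p Q Q1 R bt :: "real \<Rightarrow> real" and y0 K :: real
  assumes iF: "integrable lborel F" and iG: "integrable lborel G" and W: "weak_dyy F G"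
    and cp: "continuous_on UNIV p" and bp: "\<And>x. \<bar>p x\<bar> \<le> 1"
    and dQ: "\<And>v. (Q has_real_derivative Q1 v) (at v)"
    and dQ1: "\<And>v. (Q1 has_real_derivative (bt v - R v)) (at v)"
    and cR: "continuous_on UNIV R" and cb: "continuous_on UNIV bt"
    and bQ: "\<And>v. \<bar>Q v\<bar> \<le> K" and bQ1: "\<And>v. \<bar>Q1 v\<bar> \<le> K" and bR: "\<And>v. \<bar>R v\<bar> \<le> K"
    and bb: "\<And>v. \<bar>bt v\<bar> \<le> 1"
  shows "(\<integral>z. F z * (p (fst z) * (bt (snd z - y0) - R (snd z - y0))) \<partial>lborel)
       = (\<integral>z. G z * (p (fst z) * Q (snd z - y0)) \<partial>lborel)"
proof -
  define c where "c k = inverse (real (Suc k))" for k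
  have c0: "0 < c k" for k unfolding c_def by simp
  have c1: "c k \<le> 1" for k unfolding c_def by (simp add: field_simps)
  have cQ: "continuous_on UNIV Q" using deriv_cont[OF dQ] .
  have cQ1: "continuous_on UNIV Q1" using deriv_cont[OF dQ1] .
  note zcc = zc_facts(6,7,8)
  define phi where "phi k z = zc (fst z * c k) * p (fst z) * (zc (snd z * c k) * Q (snd z - y0))" for k z
  define phi1 where "phi1 k z = zc (fst z * c k) * p (fst z) *
     (zc1 (snd z * c k) * c k * Q (snd z - y0) + zc (snd z * c k) * Q1 (snd z - y0))" for k z
  define phi2 where "phi2 k z = zc (fst z * c k) * p (fst z) *
     (zc2 (snd z * c k) * c k * c k * Q (snd z - y0) + 2 * (zc1 (snd z * c k) * c k * Q1 (snd z - y0))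
      + zc (snd z * c k) * (bt (snd z - y0) - R (snd z - y0)))" for k z
  have C0: "continuous_on UNIV (phi k)" for k unfolding phi_def
      by (intro continuous_intros cont_comp_UNIV[OF zcc(1)] cont_comp_UNIV[OF cp] cont_comp_UNIV[OF cQ])
  have C2: "continuous_on UNIV (phi2 k)" for k unfolding phi2_def
      by (intro continuous_intros cont_comp_UNIV[OF zcc(1)] cont_comp_UNIV[OF zcc(2)] cont_comp_UNIV[OF zcc(3)]
          cont_comp_UNIV[OF cp] cont_comp_UNIV[OF cQ] cont_comp_UNIV[OF cQ1] cont_comp_UNIV[OF cR]
          cont_comp_UNIV[OF cb])
  have eq: "(\<integral>z. F z * phi2 k z \<partial>lborel) = (\<integral>z. G z * phi k z \<partial>lborel)" for k
  proof -
    have C1: "continuous_on UNIV (phi1 k)" unfolding phi1_def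
      by (intro continuous_intros cont_comp_UNIV[OF zcc(1)] cont_comp_UNIV[OF zcc(2)] cont_comp_UNIV[OF cp]
          cont_comp_UNIV[OF cQ] cont_comp_UNIV[OF cQ1])
    have Bd: "bounded {z. phi k z \<noteq> 0}"
    proof -
      have "norm z \<le> 2 / c k" if "phi k z \<noteq> 0" for z
      proof -
        have "zc (fst z * c k) \<noteq> 0" "zc (snd z * c k) \<noteq> 0" using that unfolding phi_def by auto
        then have "\<bar>fst z * c k\<bar> < 1" "\<bar>snd z * c k\<bar> < 1" using zc_facts(5) by auto
        then have "\<bar>fst z\<bar> \<le> 1 / c k" "\<bar>snd z\<bar> \<le> 1 / c k" using c0[of k]
          by (auto simp: abs_mult field_simps)
        moreover have "norm z \<le> \<bar>fst z\<bar> + \<bar>snd z\<bar>"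
          by (cases z) (simp add: norm_Pair sqrt_sum_squares_le_sum_abs)
        ultimately show ?thesis by simp
      qed
      then show ?thesis unfolding bounded_iff by blast
    qed
    have D1: "((\<lambda>s. phi k (x, s)) has_real_derivative phi1 k (x, y)) (at y)" for x y
      unfolding phi_def phi1_def fst_conv snd_conv
      by (rule DERIV_cong[OF DERIV_cmult[OF DERIV_mult[OF dscale[OF dzc] dshift[OF dQ]]]])
        (simp add: algebra_simps)
    have D2: "((\<lambda>s. phi1 k (x, s)) has_real_derivative phi2 k (x, y)) (at y)" for x y
      unfolding phi1_def phi2_def fst_conv snd_conv
      by (rule DERIV_cong[OF DERIV_cmult[OF DERIV_add[OF DERIV_mult[OF DERIV_cmult_right[OF dscale[OF dzc1]] dshift[OF dQ]]
              DERIV_mult[OF dscale[OF dzc] dshift[OF dQ1]]]]])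
        (simp add: algebra_simps)
    show ?thesis using W C0 C1 C2 Bd D1 D2 unfolding weak_dyy_def by blast
  qed
  have K0: "0 \<le> K" using bQ[of 0] by simp
  have mF: "F \<in> borel_measurable lborel" using iF by auto
  have mG: "G \<in> borel_measurable lborel" using iG by auto
  have mC: "f \<in> borel_measurable lborel" if "continuous_on UNIV f" for f :: "real \<times> real \<Rightarrow> real"
    using borel_measurable_continuous_onI[OF that] by simp
  have lim_zc: "(\<lambda>k. g (a * c k)) \<longlonglongrightarrow> g 0" if "continuous_on UNIV g" for g a
  proof -
    have "(\<lambda>k. a * c k) \<longlonglongrightarrow> a * 0" unfolding c_def by (intro tendsto_intros LIMSEQ_inverse_real_of_nat)
    then have lim: "(\<lambda>k. a * c k) \<longlonglongrightarrow> 0" by simp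
    have "isCont g 0" using that by (simp add: continuous_on_eq_continuous_at)
    then show ?thesis using lim by (rule isCont_tendsto_compose)
  qed
  have cz: "(\<lambda>k. c k) \<longlonglongrightarrow> 0" unfolding c_def by (rule LIMSEQ_inverse_real_of_nat)
  define lim2 where "lim2 z = F z * (p (fst z) * (bt (snd z - y0) - R (snd z - y0)))" for z
  define lim0 where "lim0 z = G z * (p (fst z) * Q (snd z - y0))" for z
  have L2: "(\<lambda>k. \<integral>z. F z * phi2 k z \<partial>lborel) \<longlonglongrightarrow> (\<integral>z. lim2 z \<partial>lborel)"
  proof (rule integral_dominated_convergence[where w="\<lambda>z. \<bar>F z\<bar> * (43 * K + 1)"])
    have "continuous_on UNIV (\<lambda>z. p (fst z) * (bt (snd z - y0) - R (snd z - y0)))"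
      by (intro continuous_intros cont_comp_UNIV[OF cp] cont_comp_UNIV[OF cR] cont_comp_UNIV[OF cb])
    then show "lim2 \<in> borel_measurable lborel" unfolding lim2_def
      by (intro borel_measurable_times mF mC)
    show "(\<lambda>z. F z * phi2 k z) \<in> borel_measurable lborel" for k
      by (intro borel_measurable_times mF mC C2)
    show "integrable lborel (\<lambda>z. \<bar>F z\<bar> * (43 * K + 1))" using iF by auto
    show "AE z in lborel. (\<lambda>k. F z * phi2 k z) \<longlonglongrightarrow> lim2 z"
    proof (rule AE_I2)
      fix z :: "real \<times> real"
      have "(\<lambda>k. phi2 k z) \<longlonglongrightarrow> zc 0 * p (fst z) * (zc2 0 * 0 * 0 * Q (snd z - y0) + 2 * (zc1 0 * 0 * Q1 (snd z - y0))
         + zc 0 * (bt (snd z - y0) - R (snd z - y0)))"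
        unfolding phi2_def
        by (intro tendsto_intros lim_zc zcc cz)
      then have "(\<lambda>k. phi2 k z) \<longlonglongrightarrow> p (fst z) * (bt (snd z - y0) - R (snd z - y0))"
        by (simp add: zc_facts(1))
      then show "(\<lambda>k. F z * phi2 k z) \<longlonglongrightarrow> lim2 z" unfolding lim2_def by (rule tendsto_mult_left)
    qed
    show "AE z in lborel. norm (F z * phi2 k z) \<le> \<bar>F z\<bar> * (43 * K + 1)" for k
    proof (rule AE_I2)
      fix z :: "real \<times> real"
      have "\<bar>phi2 k z\<bar> \<le> 43 * K + 1" unfolding phi2_def
        by (rule bnd3[OF zc_facts(2) bp zc_facts(4) zc_facts(3) zc_facts(2) c0 c1 bQ bQ1 bb bR])
      then show "norm (F z * phi2 k z) \<le> \<bar>F z\<bar> * (43 * K + 1)"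
        by (simp add: abs_mult mult_left_mono)
    qed
  qed
  have L0: "(\<lambda>k. \<integral>z. G z * phi k z \<partial>lborel) \<longlonglongrightarrow> (\<integral>z. lim0 z \<partial>lborel)"
  proof (rule integral_dominated_convergence[where w="\<lambda>z. \<bar>G z\<bar> * K"])
    have "continuous_on UNIV (\<lambda>z. p (fst z) * Q (snd z - y0))"
      by (intro continuous_intros cont_comp_UNIV[OF cp] cont_comp_UNIV[OF cQ])
    then show "lim0 \<in> borel_measurable lborel" unfolding lim0_def
      by (intro borel_measurable_times mG mC)
    show "(\<lambda>z. G z * phi k z) \<in> borel_measurable lborel" for k
      by (intro borel_measurable_times mG mC C0)
    show "integrable lborel (\<lambda>z. \<bar>G z\<bar> * K)" using iG by auto
    show "AE z in lborel. (\<lambda>k. G z * phi k z) \<longlonglongrightarrow> lim0 z"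
    proof (rule AE_I2)
      fix z :: "real \<times> real"
      have "(\<lambda>k. phi k z) \<longlonglongrightarrow> zc 0 * p (fst z) * (zc 0 * Q (snd z - y0))"
        unfolding phi_def
        by (intro tendsto_intros lim_zc zcc cz)
      then have "(\<lambda>k. phi k z) \<longlonglongrightarrow> p (fst z) * Q (snd z - y0)"
        by (simp add: zc_facts(1))
      then show "(\<lambda>k. G z * phi k z) \<longlonglongrightarrow> lim0 z" unfolding lim0_def by (rule tendsto_mult_left)
    qed
    show "AE z in lborel. norm (G z * phi k z) \<le> \<bar>G z\<bar> * K" for k
    proof (rule AE_I2)
      fix z :: "real \<times> real"
      have "\<bar>phi k z\<bar> \<le> 1 * K" unfolding phi_def mult.assoc[symmetric]
        by (rule m4[OF zc_facts(2) bp zc_facts(2) bQ])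
      then show "norm (G z * phi k z) \<le> \<bar>G z\<bar> * K"
        by (simp add: abs_mult mult_left_mono)
    qed
  qed
  show ?thesis using LIMSEQ_unique[OF L2[unfolded eq] L0] unfolding lim2_def lim0_def .
qed

lemma L1norm_nonneg: "0 \<le> L1norm h"
  unfolding L1norm_def by simp

lemma abs_int_bound:
  fixes F :: "real \<times> real \<Rightarrow> real" and q :: "real \<times> real \<Rightarrow> real"
  assumes iF: "integrable lborel F" and mq: "q \<in> borel_measurable lborel" and bq: "\<And>z. \<bar>q z\<bar> \<le> K"
  shows "integrable lborel (\<lambda>z. F z * q z)" and "\<bar>\<integral>z. F z * q z \<partial>lborel\<bar> \<le> K * L1norm F"
proof -
  have K0: "0 \<le> K" using bq[of 0] by simp
  show i: "integrable lborel (\<lambda>z. F z * q z)"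
  proof (rule Bochner_Integration.integrable_bound[where f="\<lambda>z. \<bar>F z\<bar> * K"])
    show "integrable lborel (\<lambda>z. \<bar>F z\<bar> * K)" using iF by auto
    show "(\<lambda>z. F z * q z) \<in> borel_measurable lborel" using iF mq by auto
    show "AE z in lborel. norm (F z * q z) \<le> norm (\<bar>F z\<bar> * K)"
      using bq K0 by (auto simp: abs_mult intro!: mult_left_mono)
  qed
  have "\<bar>\<integral>z. F z * q z \<partial>lborel\<bar> \<le> (\<integral>z. \<bar>F z * q z\<bar> \<partial>lborel)"
    using integral_norm_bound[of lborel "\<lambda>z. F z * q z"] by simp
  also have "\<dots> \<le> (\<integral>z. \<bar>F z\<bar> * K \<partial>lborel)"
    using integrable_abs[OF i] iF bq K0 by (intro integral_mono) (auto simp: abs_mult intro!: mult_left_mono)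
  also have "\<dots> = K * L1norm F" unfolding L1norm_def by simp
  finally show "\<bar>\<integral>z. F z * q z \<partial>lborel\<bar> \<le> K * L1norm F" .
qed

lemma osc_bound:
  fixes F G :: "real \<times> real \<Rightarrow> real" and p :: "real \<Rightarrow> real" and l th y0 :: real
  assumes iF: "integrable lborel F" and iG: "integrable lborel G" and W: "weak_dyy F G"
    and l: "l > 0" and cp: "continuous_on UNIV p" and bp: "\<And>x. \<bar>p x\<bar> \<le> 1"
  shows "\<bar>\<integral>z. F z * (p (fst z) * cos (l * (snd z - y0)\<^sup>2 + th)) \<partial>lborel\<bar> \<le> 5 / sqrt l * (L1norm F + L1norm G)"
proof -
  obtain Q Q1 R where dQ: "\<And>v. (Q has_real_derivative Q1 v) (at v)"
    and dQ1: "\<And>v. (Q1 has_real_derivative (cos (l * v\<^sup>2 + th) - R v)) (at v)"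
    and cR: "continuous_on UNIV R" and bR: "\<And>v. \<bar>R v\<bar> \<le> 5 / sqrt l" and bQ: "\<And>v. \<bar>Q v\<bar> \<le> 5 / sqrt l"
    and bQ1: "\<And>v. \<bar>Q1 v\<bar> \<le> 5 / sqrt l"
    using Qconstr[OF l, of th] by blast
  define K where "K = 5 / sqrt l"
  have cb: "continuous_on UNIV (\<lambda>v. cos (l * v\<^sup>2 + th))" by (intro continuous_intros)
  have cQ: "continuous_on UNIV Q" using deriv_cont[OF dQ] .
  have mC: "f \<in> borel_measurable lborel" if "continuous_on UNIV f" for f :: "real \<times> real \<Rightarrow> real"
    using borel_measurable_continuous_onI[OF that] by simp
  have tr: "(\<integral>z. F z * (p (fst z) * (cos (l * (snd z - y0)\<^sup>2 + th) - R (snd z - y0))) \<partial>lborel)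
       = (\<integral>z. G z * (p (fst z) * Q (snd z - y0)) \<partial>lborel)"
    by (rule transfer[OF iF iG W cp bp dQ dQ1 cR cb bQ bQ1 bR]) simp
  have m1: "(\<lambda>z. p (fst z) * cos (l * (snd z - y0)\<^sup>2 + th)) \<in> borel_measurable lborel"
    by (intro mC continuous_intros cont_comp_UNIV[OF cp])
  have m2: "(\<lambda>z. p (fst z) * R (snd z - y0)) \<in> borel_measurable lborel"
    by (intro mC continuous_intros cont_comp_UNIV[OF cp] cont_comp_UNIV[OF cR])
  have m3: "(\<lambda>z. p (fst z) * Q (snd z - y0)) \<in> borel_measurable lborel"
    by (intro mC continuous_intros cont_comp_UNIV[OF cp] cont_comp_UNIV[OF cQ])
  have b1: "\<bar>p (fst z) * cos (l * (snd z - y0)\<^sup>2 + th)\<bar> \<le> 1" for z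
    using bp[of "fst z"] by (simp add: abs_mult mult_le_one)
  have b2: "\<bar>p (fst z) * R (snd z - y0)\<bar> \<le> K" for z
    using m4[OF bp[of "fst z"], of 1 1 "R (snd z - y0)" K] bR unfolding K_def by simp
  have b3: "\<bar>p (fst z) * Q (snd z - y0)\<bar> \<le> K" for z
    using m4[OF bp[of "fst z"], of 1 1 "Q (snd z - y0)" K] bQ unfolding K_def by simp
  note i1 = abs_int_bound(1)[OF iF m1 b1]
  note i2 = abs_int_bound(1)[OF iF m2 b2]
  have "(\<integral>z. F z * (p (fst z) * cos (l * (snd z - y0)\<^sup>2 + th)) \<partial>lborel)
      = (\<integral>z. F z * (p (fst z) * (cos (l * (snd z - y0)\<^sup>2 + th) - R (snd z - y0))) + F z * (p (fst z) * R (snd z - y0)) \<partial>lborel)"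
    by (simp add: algebra_simps)
  also have "\<dots> = (\<integral>z. F z * (p (fst z) * (cos (l * (snd z - y0)\<^sup>2 + th) - R (snd z - y0))) \<partial>lborel)
      + (\<integral>z. F z * (p (fst z) * R (snd z - y0)) \<partial>lborel)"
  proof (rule Bochner_Integration.integral_add)
    show "integrable lborel (\<lambda>z. F z * (p (fst z) * (cos (l * (snd z - y0)\<^sup>2 + th) - R (snd z - y0))))"
      using Bochner_Integration.integrable_diff[OF i1 i2] by (simp add: algebra_simps)
  qed (rule i2)
  also have "\<dots> = (\<integral>z. G z * (p (fst z) * Q (snd z - y0)) \<partial>lborel) + (\<integral>z. F z * (p (fst z) * R (snd z - y0)) \<partial>lborel)"
    using tr by simp
  finally have eq: "(\<integral>z. F z * (p (fst z) * cos (l * (snd z - y0)\<^sup>2 + th)) \<partial>lborel)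
     = (\<integral>z. G z * (p (fst z) * Q (snd z - y0)) \<partial>lborel) + (\<integral>z. F z * (p (fst z) * R (snd z - y0)) \<partial>lborel)" .
  have "\<bar>\<integral>z. G z * (p (fst z) * Q (snd z - y0)) \<partial>lborel\<bar> \<le> K * L1norm G"
    by (rule abs_int_bound(2)[OF iG m3 b3])
  moreover have "\<bar>\<integral>z. F z * (p (fst z) * R (snd z - y0)) \<partial>lborel\<bar> \<le> K * L1norm F"
    by (rule abs_int_bound(2)[OF iF m2 b2])
  ultimately show ?thesis unfolding eq K_def[symmetric] by (simp add: algebra_simps)
qed

lemma phase_bound:
  fixes F G :: "real \<times> real \<Rightarrow> real" and a0 b c0 x y :: real
  assumes iF: "integrable lborel F" and iG: "integrable lborel G" and W: "weak_dyy F G"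
    and b: "b \<noteq> 0"
  shows "\<bar>\<integral>z. F z * cos (a0 * (x - fst z) + b * (y - snd z)\<^sup>2 + c0) \<partial>lborel\<bar>
     \<le> 10 / sqrt \<bar>b\<bar> * (L1norm F + L1norm G)"
proof -
  define l where "l = \<bar>b\<bar>"
  have l: "l > 0" using b by (simp add: l_def)
  define p1 where "p1 w = cos (a0 * (x - w) + c0)" for w
  define p2 where "p2 w = - sgn b * sin (a0 * (x - w) + c0)" for w
  have cp1: "continuous_on UNIV p1" unfolding p1_def by (intro continuous_intros)
  have cp2: "continuous_on UNIV p2" unfolding p2_def by (intro continuous_intros)
  have bp1: "\<bar>p1 w\<bar> \<le> 1" for w unfolding p1_def by simp
  have bp2: "\<bar>p2 w\<bar> \<le> 1" for w unfolding p2_def by (simp add: abs_mult abs_sgn_eq)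
  have key: "cos (a0 * (x - fst z) + b * (y - snd z)\<^sup>2 + c0)
     = p1 (fst z) * cos (l * (snd z - y)\<^sup>2 + 0) + p2 (fst z) * cos (l * (snd z - y)\<^sup>2 + - (pi/2))" for z
  proof -
    have e1: "cos (b * (y - snd z)\<^sup>2) = cos (l * (snd z - y)\<^sup>2)"
      unfolding l_def by (cases "b \<ge> 0") (auto simp: power2_commute)
    have cs: "cos (t + - (pi/2)) = sin t" for t by (simp add: cos_diff)
    have e2: "sin (b * (y - snd z)\<^sup>2) = sgn b * cos (l * (snd z - y)\<^sup>2 + - (pi/2))"
      unfolding l_def cs using b
      by (cases "b > 0") (auto simp: power2_commute sgn_if)
    have "a0 * (x - fst z) + b * (y - snd z)\<^sup>2 + c0 = (a0 * (x - fst z) + c0) + b * (y - snd z)\<^sup>2"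
      by simp
    then have "cos (a0 * (x - fst z) + b * (y - snd z)\<^sup>2 + c0)
       = cos (a0 * (x - fst z) + c0) * cos (b * (y - snd z)\<^sup>2) - sin (a0 * (x - fst z) + c0) * sin (b * (y - snd z)\<^sup>2)"
      by (simp only: cos_add)
    also have "\<dots> = p1 (fst z) * cos (l * (snd z - y)\<^sup>2 + 0) + p2 (fst z) * cos (l * (snd z - y)\<^sup>2 + - (pi/2))"
      unfolding e1 e2 p1_def p2_def by simp
    finally show ?thesis .
  qed
  have mC: "f \<in> borel_measurable lborel" if "continuous_on UNIV f" for f :: "real \<times> real \<Rightarrow> real"
    using borel_measurable_continuous_onI[OF that] by simp
  have m1: "(\<lambda>z. p1 (fst z) * cos (l * (snd z - y)\<^sup>2 + 0)) \<in> borel_measurable lborel"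
    by (intro mC continuous_intros cont_comp_UNIV[OF cp1])
  have m2: "(\<lambda>z. p2 (fst z) * cos (l * (snd z - y)\<^sup>2 + - (pi/2))) \<in> borel_measurable lborel"
    by (intro mC continuous_intros cont_comp_UNIV[OF cp2])
  have bb: "\<bar>p (fst z) * cos (l * (snd z - y)\<^sup>2 + th)\<bar> \<le> 1" if "\<And>w. \<bar>p w\<bar> \<le> 1" for p th z
    using that[of "fst z"] by (simp add: abs_mult mult_le_one)
  have i1: "integrable lborel (\<lambda>z. F z * (p1 (fst z) * cos (l * (snd z - y)\<^sup>2 + 0)))"
    by (rule abs_int_bound(1)[OF iF m1 bb[of p1, OF bp1]])
  have i2: "integrable lborel (\<lambda>z. F z * (p2 (fst z) * cos (l * (snd z - y)\<^sup>2 + - (pi/2))))"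
    by (rule abs_int_bound(1)[OF iF m2 bb[of p2, OF bp2]])
  have "(\<integral>z. F z * cos (a0 * (x - fst z) + b * (y - snd z)\<^sup>2 + c0) \<partial>lborel)
     = (\<integral>z. F z * (p1 (fst z) * cos (l * (snd z - y)\<^sup>2 + 0)) + F z * (p2 (fst z) * cos (l * (snd z - y)\<^sup>2 + - (pi/2))) \<partial>lborel)"
    unfolding key by (simp add: algebra_simps)
  also have "\<dots> = (\<integral>z. F z * (p1 (fst z) * cos (l * (snd z - y)\<^sup>2 + 0)) \<partial>lborel)
      + (\<integral>z. F z * (p2 (fst z) * cos (l * (snd z - y)\<^sup>2 + - (pi/2))) \<partial>lborel)"
    by (rule Bochner_Integration.integral_add[OF i1 i2])
  finally have eq: "(\<integral>z. F z * cos (a0 * (x - fst z) + b * (y - snd z)\<^sup>2 + c0) \<partial>lborel)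
     = (\<integral>z. F z * (p1 (fst z) * cos (l * (snd z - y)\<^sup>2 + 0)) \<partial>lborel)
      + (\<integral>z. F z * (p2 (fst z) * cos (l * (snd z - y)\<^sup>2 + - (pi/2))) \<partial>lborel)" .
  have A: "\<bar>\<integral>z. F z * (p1 (fst z) * cos (l * (snd z - y)\<^sup>2 + 0)) \<partial>lborel\<bar> \<le> 5 / sqrt l * (L1norm F + L1norm G)"
    by (rule osc_bound[OF iF iG W l cp1 bp1])
  have B: "\<bar>\<integral>z. F z * (p2 (fst z) * cos (l * (snd z - y)\<^sup>2 + - (pi/2))) \<partial>lborel\<bar> \<le> 5 / sqrt l * (L1norm F + L1norm G)"
    by (rule osc_bound[OF iF iG W l cp2 bp2])
  show ?thesis unfolding eq l_def[symmetric] using A B by linarith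
qed

lemma integrable_tensor:
  fixes f :: "real \<Rightarrow> real" and g :: "real \<times> real \<Rightarrow> real"
  assumes f: "integrable lborel f" and g: "integrable lborel g"
  shows "integrable (lborel \<Otimes>\<^sub>M lborel) (\<lambda>(r, w). f r * g w)"
proof (rule integrableI_bounded)
  have [measurable]: "f \<in> borel_measurable lborel" "g \<in> borel_measurable lborel" using f g by auto
  show "(\<lambda>(r, w). f r * g w) \<in> borel_measurable (lborel \<Otimes>\<^sub>M lborel)" by measurable
  have "(\<integral>\<^sup>+ z. ennreal (norm ((\<lambda>(r, w). f r * g w) z)) \<partial>(lborel \<Otimes>\<^sub>M lborel))
      = (\<integral>\<^sup>+ r. \<integral>\<^sup>+ w. ennreal (norm ((\<lambda>(r, w). f r * g w) (r, w))) \<partial>lborel \<partial>lborel)"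
    by (rule lborel.nn_integral_fst[symmetric]) measurable
  also have "\<dots> = (\<integral>\<^sup>+ r. ennreal \<bar>f r\<bar> * (\<integral>\<^sup>+ w. ennreal \<bar>g w\<bar> \<partial>lborel) \<partial>lborel)"
    by (simp add: abs_mult ennreal_mult nn_integral_cmult)
  also have "\<dots> = (\<integral>\<^sup>+ r. ennreal \<bar>f r\<bar> \<partial>lborel) * (\<integral>\<^sup>+ w. ennreal \<bar>g w\<bar> \<partial>lborel)"
    by (simp add: nn_integral_multc)
  also have "\<dots> < \<infinity>" using f g unfolding integrable_iff_bounded by (simp add: ennreal_mult_less_top)
  finally show "(\<integral>\<^sup>+ z. ennreal (norm ((\<lambda>(r, w). f r * g w) z)) \<partial>(lborel \<Otimes>\<^sub>M lborel)) < \<infinity>" .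
qed

lemma abs_cos_factor:
  assumes "\<bar>c\<bar> \<le> 1" shows "\<bar>(a::real) * c * f\<bar> \<le> \<bar>a * f\<bar>"
proof -
  have "\<bar>c\<bar> * \<bar>f\<bar> \<le> \<bar>f\<bar>" using assms by (intro mult_left_le_one_le) auto
  then have "\<bar>a\<bar> * (\<bar>c\<bar> * \<bar>f\<bar>) \<le> \<bar>a\<bar> * \<bar>f\<bar>" by (intro mult_left_mono) auto
  then show ?thesis by (simp add: abs_mult mult.assoc)
qed

lemma fubini_bound:
  fixes F G :: "real \<times> real \<Rightarrow> real" and W a0 b c0 :: "real \<Rightarrow> real" and P x y :: real
  assumes iF: "integrable lborel F" and iG: "integrable lborel G" and Wk: "weak_dyy F G"
    and mW[measurable]: "W \<in> borel_measurable lborel"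
    and ma[measurable]: "a0 \<in> borel_measurable lborel"
    and mb[measurable]: "b \<in> borel_measurable lborel"
    and mc[measurable]: "c0 \<in> borel_measurable lborel"
    and b0: "\<And>r. r > 0 \<Longrightarrow> b r \<noteq> 0"
    and iW: "integrable lborel (\<lambda>r. indicator {0<..} r * W r)"
  shows "ennreal \<bar>\<integral>w. F w * (P * (LBINT r:{0<..}. W r * cos (a0 r * (x - fst w) + b r * (y - snd w)\<^sup>2 + c0 r))) \<partial>lborel\<bar>
    \<le> ennreal (\<bar>P\<bar> * 10 * (L1norm F + L1norm G)) * (\<integral>\<^sup>+ r. ennreal (indicator {0<..} r * (\<bar>W r\<bar> / sqrt \<bar>b r\<bar>)) \<partial>lborel)"
proof -
  define M where "M = L1norm F + L1norm G"
  have M0: "0 \<le> M" using L1norm_nonneg[of F] L1norm_nonneg[of G] by (simp add: M_def)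
  define cs where "cs r w = cos (a0 r * (x - fst w) + b r * (y - snd w)\<^sup>2 + c0 r)" for r w
  define H where "H r w = indicator {0<..} r * W r * cs r w * F w" for r w
  have mF: "F \<in> borel_measurable lborel" using iF by auto
  have [measurable]: "(\<lambda>p. F (snd p)) \<in> borel_measurable (lborel \<Otimes>\<^sub>M lborel)"
    by (rule measurable_compose[OF measurable_snd mF])
  have ms: "(\<lambda>w. snd w) \<in> borel_measurable (lborel :: (real \<times> real) measure)"
    using borel_measurable_continuous_onI[OF continuous_on_snd[OF continuous_on_id]] by simp
  have mf: "(\<lambda>w. fst w) \<in> borel_measurable (lborel :: (real \<times> real) measure)"
    using borel_measurable_continuous_onI[OF continuous_on_fst[OF continuous_on_id]] by simp
  have [measurable]: "(\<lambda>p. snd (snd p)) \<in> borel_measurable (lborel \<Otimes>\<^sub>M (lborel :: (real \<times> real) measure))"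
    by (rule measurable_compose[OF measurable_snd ms])
  have [measurable]: "(\<lambda>p. fst (snd p)) \<in> borel_measurable (lborel \<Otimes>\<^sub>M (lborel :: (real \<times> real) measure))"
    by (rule measurable_compose[OF measurable_snd mf])
  have mH: "(\<lambda>(r, w). H r w) \<in> borel_measurable (lborel \<Otimes>\<^sub>M lborel)" unfolding H_def cs_def by measurable
  have iH: "integrable (lborel \<Otimes>\<^sub>M lborel) (\<lambda>(r, w). H r w)"
  proof (rule Bochner_Integration.integrable_bound[OF integrable_tensor[OF iW iF] mH])
    show "AE z in lborel \<Otimes>\<^sub>M lborel. norm ((\<lambda>(r, w). H r w) z)
        \<le> norm ((\<lambda>(r, w). indicator {0<..} r * W r * F w) z)"
      by (rule AE_I2) (auto simp: H_def cs_def intro!: abs_cos_factor)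
  qed
  have Fub: "(\<integral>w. (\<integral>r. H r w \<partial>lborel) \<partial>lborel) = (\<integral>r. (\<integral>w. H r w \<partial>lborel) \<partial>lborel)"
    using lborel_pair.Fubini_integral[OF iH] .
  have inner1: "(\<integral>r. H r w \<partial>lborel) = F w * (LBINT r:{0<..}. W r * cs r w)" for w
  proof -
    have "(\<integral>r. H r w \<partial>lborel) = (\<integral>r. indicator {0<..} r *\<^sub>R (W r * cs r w) * F w \<partial>lborel)"
      unfolding H_def by (simp add: mult.assoc)
    also have "\<dots> = (LBINT r:{0<..}. W r * cs r w) * F w"
      unfolding set_lebesgue_integral_def by (rule integral_mult_left_zero)
    finally show ?thesis by simp
  qed
  define g where "g r = (\<integral>w. H r w \<partial>lborel)" for r
  have ig: "integrable lborel g"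
    using lborel_pair.integrable_fst'[OF iH] unfolding g_def by simp
  have gb: "\<bar>g r\<bar> \<le> 10 * M * (indicator {0<..} r * (\<bar>W r\<bar> / sqrt \<bar>b r\<bar>))" for r
  proof (cases "r > 0")
    case True
    have "g r = (\<integral>w. W r * (F w * cs r w) \<partial>lborel)"
      unfolding g_def H_def using True by (simp add: mult_ac)
    also have "\<dots> = W r * (\<integral>w. F w * cs r w \<partial>lborel)" by (rule integral_mult_right_zero)
    finally have "\<bar>g r\<bar> = \<bar>W r\<bar> * \<bar>\<integral>w. F w * cs r w \<partial>lborel\<bar>" by (simp add: abs_mult)
    also have "\<dots> \<le> \<bar>W r\<bar> * (10 / sqrt \<bar>b r\<bar> * M)"
      unfolding cs_def M_def by (intro mult_left_mono phase_bound[OF iF iG Wk b0[OF True]]) auto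
    also have "\<dots> = 10 * M * (indicator {0<..} r * (\<bar>W r\<bar> / sqrt \<bar>b r\<bar>))" using True by simp
    finally show ?thesis .
  next
    case False
    then show ?thesis unfolding g_def H_def by simp
  qed
  have "(\<integral>w. F w * (P * (LBINT r:{0<..}. W r * cs r w)) \<partial>lborel) = P * (\<integral>w. F w * (LBINT r:{0<..}. W r * cs r w) \<partial>lborel)"
    by (simp add: mult.left_commute[of "F _" P] integral_mult_right_zero)
  also have "\<dots> = P * (\<integral>r. g r \<partial>lborel)" unfolding g_def Fub[symmetric] inner1 ..
  finally have eq: "(\<integral>w. F w * (P * (LBINT r:{0<..}. W r * cs r w)) \<partial>lborel) = P * (\<integral>r. g r \<partial>lborel)" .
  have "ennreal \<bar>\<integral>r. g r \<partial>lborel\<bar> \<le> (\<integral>\<^sup>+ r. ennreal (norm (g r)) \<partial>lborel)"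
    using integral_norm_bound_ennreal[OF ig] by simp
  also have "\<dots> \<le> (\<integral>\<^sup>+ r. ennreal (10 * M) * ennreal (indicator {0<..} r * (\<bar>W r\<bar> / sqrt \<bar>b r\<bar>)) \<partial>lborel)"
    using gb M0 by (intro nn_integral_mono) (simp add: ennreal_mult[symmetric])
  also have "\<dots> = ennreal (10 * M) * (\<integral>\<^sup>+ r. ennreal (indicator {0<..} r * (\<bar>W r\<bar> / sqrt \<bar>b r\<bar>)) \<partial>lborel)"
    by (rule nn_integral_cmult) measurable
  finally have B: "ennreal \<bar>\<integral>r. g r \<partial>lborel\<bar> \<le> ennreal (10 * M) * (\<integral>\<^sup>+ r. ennreal (indicator {0<..} r * (\<bar>W r\<bar> / sqrt \<bar>b r\<bar>)) \<partial>lborel)" .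
  have "ennreal \<bar>P * (\<integral>r. g r \<partial>lborel)\<bar> = ennreal \<bar>P\<bar> * ennreal \<bar>\<integral>r. g r \<partial>lborel\<bar>"
    by (simp add: abs_mult ennreal_mult)
  also have "\<dots> \<le> ennreal \<bar>P\<bar> * (ennreal (10 * M) * (\<integral>\<^sup>+ r. ennreal (indicator {0<..} r * (\<bar>W r\<bar> / sqrt \<bar>b r\<bar>)) \<partial>lborel))"
    by (rule mult_left_mono[OF B]) simp
  also have "\<dots> = ennreal (\<bar>P\<bar> * 10 * M) * (\<integral>\<^sup>+ r. ennreal (indicator {0<..} r * (\<bar>W r\<bar> / sqrt \<bar>b r\<bar>)) \<partial>lborel)"
    using M0 by (simp add: ennreal_mult mult.assoc)
  finally show ?thesis unfolding eq[unfolded cs_def] M_def cs_def .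
qed

lemma gauss_scale:
  fixes c :: real and g :: "real \<Rightarrow> real" and I :: real
  assumes c: "c > 0" and hg: "has_bochner_integral lborel (\<lambda>u. indicator {0..} u * g u) I"
  shows "integrable lborel (\<lambda>x. indicator {0..} x * g (sqrt c * x))"
    and "(\<integral>x. indicator {0..} x * g (sqrt c * x) \<partial>lborel) = I / sqrt c"
proof -
  have sc: "sqrt c > 0" using c by simp
  have ig: "integrable lborel (\<lambda>u. indicator {0..} u * g u)" using hg by (simp add: has_bochner_integral_iff)
  have eqf: "(\<lambda>x. (\<lambda>u. indicator {0..} u * g u) (0 + sqrt c * x)) = (\<lambda>x. indicator {0..} x * g (sqrt c * x))"
    using sc by (auto simp: fun_eq_iff indicator_def zero_le_mult_iff)
  show i: "integrable lborel (\<lambda>x. indicator {0..} x * g (sqrt c * x))"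
    using lborel_integrable_real_affine[OF ig, of "sqrt c" 0] sc unfolding eqf by simp
  have "I = (\<integral>u. indicator {0..} u * g u \<partial>lborel)" using hg by (simp add: has_bochner_integral_iff)
  also have "\<dots> = \<bar>sqrt c\<bar> *\<^sub>R (\<integral>x. (\<lambda>u. indicator {0..} u * g u) (0 + sqrt c * x) \<partial>lborel)"
    by (rule lborel_integral_real_affine) (use sc in simp)
  also have "\<dots> = sqrt c * (\<integral>x. indicator {0..} x * g (sqrt c * x) \<partial>lborel)" unfolding eqf using sc by simp
  finally show "(\<integral>x. indicator {0..} x * g (sqrt c * x) \<partial>lborel) = I / sqrt c" using sc by (simp add: field_simps)
qed

lemma gauss_facts:
  fixes c :: real assumes c: "c > 0"
  shows "integrable lborel (\<lambda>x. indicator {0..} x * exp (- c * x\<^sup>2))"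
    and "integrable lborel (\<lambda>x. indicator {0..} x * (exp (- c * x\<^sup>2) * x))"
    and "(\<integral>\<^sup>+x. ennreal (indicator {0..} x * exp (- c * x\<^sup>2)) \<partial>lborel) = ennreal (sqrt pi / 2 / sqrt c)"
proof -
  have sc: "sqrt c > 0" using c by simp
  have sq: "(sqrt c * x)\<^sup>2 = c * x\<^sup>2" for x using c by (simp add: power_mult_distrib)
  have h0: "has_bochner_integral lborel (\<lambda>u. indicator {0..} u * exp (- u\<^sup>2)) (sqrt pi / 2)"
    using gaussian_moment_0 by simp
  have h1: "has_bochner_integral lborel (\<lambda>u::real. indicator {0..} u * (exp (- u\<^sup>2) * u)) (1 / 2::real)"
    using gaussian_moment_1 by simp
  show i0: "integrable lborel (\<lambda>x. indicator {0..} x * exp (- c * x\<^sup>2))"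
    using gauss_scale(1)[OF c h0] unfolding sq by simp
  have "integrable lborel (\<lambda>x. indicator {0..} x * (exp (- c * x\<^sup>2) * (sqrt c * x)))"
    using gauss_scale(1)[OF c h1] unfolding sq by simp
  from Bochner_Integration.integrable_mult_right[OF this, of "1 / sqrt c"]
  have "integrable lborel (\<lambda>x. (1 / sqrt c) * (indicator {0..} x * (exp (- c * x\<^sup>2) * (sqrt c * x))))" .
  moreover have "(\<lambda>x. (1 / sqrt c) * (indicator {0..} x * (exp (- c * x\<^sup>2) * (sqrt c * x))))
      = (\<lambda>x. indicator {0..} x * (exp (- c * x\<^sup>2) * x))" using sc by (auto simp: fun_eq_iff)
  ultimately show "integrable lborel (\<lambda>x. indicator {0..} x * (exp (- c * x\<^sup>2) * x))" by simp
  have "(\<integral>x. indicator {0..} x * exp (- c * x\<^sup>2) \<partial>lborel) = sqrt pi / 2 / sqrt c"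
    using gauss_scale(2)[OF c h0] unfolding sq by simp
  then show "(\<integral>\<^sup>+x. ennreal (indicator {0..} x * exp (- c * x\<^sup>2)) \<partial>lborel) = ennreal (sqrt pi / 2 / sqrt c)"
    using nn_integral_eq_integral[OF i0] by simp
qed

lemma sqrt_le_1_plus:
  assumes x: "0 \<le> x" shows "sqrt x \<le> 1 + (x::real)"
proof (cases "x \<le> 1")
  case True
  then have "sqrt x \<le> 1" by simp
  then show ?thesis using x by linarith
next
  case False
  then have "1 \<le> sqrt x" by simp
  then have "sqrt x * 1 \<le> sqrt x * sqrt x" by (intro mult_left_mono) auto
  then have "sqrt x \<le> x" using x by simp
  then show ?thesis by simp
qed

lemma cont_meas: "continuous_on UNIV f \<Longrightarrow> (f :: real \<Rightarrow> real) \<in> borel_measurable lborel"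
  using borel_measurable_continuous_onI by simp

lemma Sker_bound:
  fixes eps nu s x y :: real and F G :: "real \<times> real \<Rightarrow> real"
  assumes eps: "eps = 1 \<or> eps = -1" and nu: "nu > 0" and s: "s > 0"
    and iF: "integrable lborel F" and iG: "integrable lborel G" and Wk: "weak_dyy F G"
  shows "\<bar>\<integral>w. Sker eps nu (x - fst w) (y - snd w) s * F w \<partial>lborel\<bar>
     \<le> (10 * sqrt (pi / nu) / (2 * pi powr (3/2))) / sqrt s * (L1norm F + L1norm G)"
proof -
  define P where "P = 1 / (2 * pi powr (3/2) * sqrt s)"
  define W where "W \<xi> = sqrt \<xi> * exp (- nu * s * \<xi>^2)" for \<xi> :: real
  define a0 where "a0 \<xi> = \<xi>" for \<xi> :: real
  define b where "b \<xi> = \<xi> / (4 * eps * s)" for \<xi> :: real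
  define c0 where "c0 \<xi> = s * \<xi>^3 - pi / 4 * eps" for \<xi> :: real
  define M where "M = L1norm F + L1norm G"
  have M0: "0 \<le> M" using L1norm_nonneg[of F] L1norm_nonneg[of G] by (simp add: M_def)
  have e0: "eps \<noteq> 0" and ea: "\<bar>eps\<bar> = 1" using eps by auto
  have c: "nu * s > 0" using nu s by simp
  have eq: "Sker eps nu (x - fst w) (y - snd w) s * F w
      = F w * (P * (LBINT r:{0<..}. W r * cos (a0 r * (x - fst w) + b r * (y - snd w)\<^sup>2 + c0 r)))" for w
  proof -
    have "(\<lambda>\<xi>. sqrt \<xi> * exp (- nu * s * \<xi>^2) * cos (\<xi> * (x - fst w) + s * \<xi>^3 + (y - snd w)^2 * \<xi> / (4 * eps * s) - pi / 4 * eps))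
       = (\<lambda>r. W r * cos (a0 r * (x - fst w) + b r * (y - snd w)\<^sup>2 + c0 r))"
      unfolding W_def a0_def b_def c0_def by (auto simp: fun_eq_iff algebra_simps)
    then show ?thesis unfolding Sker_def P_def by (simp add: mult.commute)
  qed
  have mW: "W \<in> borel_measurable lborel" unfolding W_def by (intro cont_meas continuous_intros)
  have ma: "a0 \<in> borel_measurable lborel" unfolding a0_def by (intro cont_meas continuous_intros)
  have mb: "b \<in> borel_measurable lborel" unfolding b_def
    by (intro cont_meas continuous_intros) (use e0 s in auto)
  have mc: "c0 \<in> borel_measurable lborel" unfolding c0_def by (intro cont_meas continuous_intros)
  have b0: "b r \<noteq> 0" if "r > 0" for r using that e0 s by (simp add: b_def)
  have iW: "integrable lborel (\<lambda>r. indicator {0<..} r * W r)"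
  proof (rule Bochner_Integration.integrable_bound[OF Bochner_Integration.integrable_add[OF gauss_facts(1)[OF c] gauss_facts(2)[OF c]]])
    show "(\<lambda>r. indicator {0<..} r * W r) \<in> borel_measurable lborel" using mW by measurable
    show "AE r in lborel. norm (indicator {0<..} r * W r)
        \<le> norm (indicator {0..} r * exp (- (nu * s) * r\<^sup>2) + indicator {0..} r * (exp (- (nu * s) * r\<^sup>2) * r))"
    proof (rule AE_I2)
      fix r :: real
      show "norm (indicator {0<..} r * W r)
        \<le> norm (indicator {0..} r * exp (- (nu * s) * r\<^sup>2) + indicator {0..} r * (exp (- (nu * s) * r\<^sup>2) * r))"
      proof (cases "r > 0")
        case True
        have "sqrt r * exp (- nu * s * r\<^sup>2) \<le> (1 + r) * exp (- nu * s * r\<^sup>2)"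
          using sqrt_le_1_plus[of r] True by (intro mult_right_mono) auto
        then show ?thesis using True by (simp add: W_def algebra_simps)
      next
        case False
        then show ?thesis by simp
      qed
    qed
  qed
  have key: "ennreal \<bar>\<integral>w. F w * (P * (LBINT r:{0<..}. W r * cos (a0 r * (x - fst w) + b r * (y - snd w)\<^sup>2 + c0 r))) \<partial>lborel\<bar>
    \<le> ennreal (\<bar>P\<bar> * 10 * M) * (\<integral>\<^sup>+ r. ennreal (indicator {0<..} r * (\<bar>W r\<bar> / sqrt \<bar>b r\<bar>)) \<partial>lborel)"
    unfolding M_def by (rule fubini_bound[OF iF iG Wk mW ma mb mc b0 iW])
  have wb: "indicator {0<..} r * (\<bar>W r\<bar> / sqrt \<bar>b r\<bar>) = 2 * sqrt s * (indicator {0<..} r * exp (- (nu * s) * r\<^sup>2))" for r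
  proof (cases "r > 0")
    case True
    have "\<bar>b r\<bar> = r / (4 * s)" using True s ea by (simp add: b_def abs_mult)
    then have sb: "sqrt \<bar>b r\<bar> = sqrt r / (2 * sqrt s)" using True s by (simp add: real_sqrt_divide real_sqrt_mult)
    have sr: "sqrt r > 0" using True by simp
    have "\<bar>W r\<bar> / sqrt \<bar>b r\<bar> = sqrt r * exp (- nu * s * r^2) / (sqrt r / (2 * sqrt s))"
      unfolding sb W_def using sr by (simp add: abs_mult)
    also have "\<dots> = 2 * sqrt s * exp (- (nu * s) * r\<^sup>2)" using sr s by (simp add: field_simps)
    finally show ?thesis using True by simp
  next
    case False
    then show ?thesis by simp
  qed
  have "(\<integral>\<^sup>+ r. ennreal (indicator {0<..} r * (\<bar>W r\<bar> / sqrt \<bar>b r\<bar>)) \<partial>lborel)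
      = (\<integral>\<^sup>+ r. ennreal (2 * sqrt s) * ennreal (indicator {0<..} r * exp (- (nu * s) * r\<^sup>2)) \<partial>lborel)"
    unfolding wb using s by (simp add: ennreal_mult)
  also have "\<dots> = ennreal (2 * sqrt s) * (\<integral>\<^sup>+ r. ennreal (indicator {0<..} r * exp (- (nu * s) * r\<^sup>2)) \<partial>lborel)"
    by (rule nn_integral_cmult) measurable
  also have "\<dots> \<le> ennreal (2 * sqrt s) * (\<integral>\<^sup>+ r. ennreal (indicator {0..} r * exp (- (nu * s) * r\<^sup>2)) \<partial>lborel)"
    by (intro mult_left_mono nn_integral_mono) (auto simp: indicator_def)
  also have "\<dots> = ennreal (2 * sqrt s) * ennreal (sqrt pi / 2 / sqrt (nu * s))"
    unfolding gauss_facts(3)[OF c] ..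
  also have "\<dots> = ennreal (sqrt (pi / nu))"
    using s nu by (simp add: ennreal_mult[symmetric] real_sqrt_mult real_sqrt_divide field_simps)
  finally have I: "(\<integral>\<^sup>+ r. ennreal (indicator {0<..} r * (\<bar>W r\<bar> / sqrt \<bar>b r\<bar>)) \<partial>lborel) \<le> ennreal (sqrt (pi / nu))" .
  have "ennreal \<bar>\<integral>w. Sker eps nu (x - fst w) (y - snd w) s * F w \<partial>lborel\<bar> \<le> ennreal (\<bar>P\<bar> * 10 * M) * ennreal (sqrt (pi / nu))"
    unfolding eq using order_trans[OF key mult_left_mono[OF I]] by simp
  also have "\<dots> = ennreal (\<bar>P\<bar> * 10 * M * sqrt (pi / nu))" by (rule ennreal_mult[symmetric]) (use M0 nu in auto)
  finally have "\<bar>\<integral>w. Sker eps nu (x - fst w) (y - snd w) s * F w \<partial>lborel\<bar> \<le> \<bar>P\<bar> * 10 * M * sqrt (pi / nu)"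
    using M0 nu by (subst (asm) ennreal_le_iff) auto
  also have "\<dots> = (10 * sqrt (pi / nu) / (2 * pi powr (3/2))) / sqrt s * M"
    unfolding P_def using s by (simp add: field_simps)
  finally show ?thesis unfolding M_def .
qed

lemma Gamma_nn:
  fixes x :: real assumes x: "x > 0"
  shows "(\<integral>\<^sup>+ r. ennreal (indicator {0<..} r * (r powr (x - 1) * exp (- r))) \<partial>lborel) \<le> ennreal (Gamma x)"
    and "integrable lborel (\<lambda>r. indicator {0<..} r * (r powr (x - 1) * exp (- r)))"
proof -
  have h: "((\<lambda>t. t powr (x - 1) / exp t) has_integral Gamma x) {0..}" by (rule Gamma_integral_real[OF x])
  have nn: "(\<integral>\<^sup>+ r. ennreal (r powr (x - 1) / exp r) * indicator {0..} r \<partial>lborel) = ennreal (Gamma x)"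
    by (rule nn_integral_has_integral_lebesgue'[OF _ h]) simp
  show le: "(\<integral>\<^sup>+ r. ennreal (indicator {0<..} r * (r powr (x - 1) * exp (- r))) \<partial>lborel) \<le> ennreal (Gamma x)"
    unfolding nn[symmetric]
    by (intro nn_integral_mono) (auto simp: indicator_def exp_minus field_simps)
  show "integrable lborel (\<lambda>r. indicator {0<..} r * (r powr (x - 1) * exp (- r)))"
  proof (rule integrableI_bounded)
    show "(\<lambda>r. indicator {0<..} r * (r powr (x - 1) * exp (- r))) \<in> borel_measurable lborel" by measurable
    have "(\<integral>\<^sup>+ r. ennreal (norm (indicator {0<..} r * (r powr (x - 1) * exp (- r)))) \<partial>lborel)
       = (\<integral>\<^sup>+ r. ennreal (indicator {0<..} r * (r powr (x - 1) * exp (- r))) \<partial>lborel)"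
      by (intro nn_integral_cong) (auto simp: indicator_def)
    also have "\<dots> < \<infinity>" using le by (simp add: le_less_trans)
    finally show "(\<integral>\<^sup>+ r. ennreal (norm (indicator {0<..} r * (r powr (x - 1) * exp (- r)))) \<partial>lborel) < \<infinity>" .
  qed
qed

lemma t1: fixes s :: real assumes s: "s > 0" shows "(s powr (-3/4))\<^sup>2 = s powr (-3/2)"
proof -
  have "(s powr (-3/4))\<^sup>2 = s powr (-3/4) * s powr (-3/4)" by (simp add: power2_eq_square)
  also have "\<dots> = s powr (-3/4 + -3/4)" by (rule powr_add[symmetric])
  finally show ?thesis by simp
qed
lemma t2: fixes s :: real assumes s: "s > 0" shows "sqrt (s powr (-3/2)) = s powr (-3/4)"
proof -
  have "sqrt (s powr (-3/2)) = (s powr (-3/2)) powr (1/2)" by (simp add: powr_half_sqrt)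
  also have "\<dots> = s powr (-3/2 * (1/2))" by (simp add: powr_powr)
  finally show ?thesis by simp
qed
lemma t3: fixes r nu :: real assumes r: "r > 0" and nu: "nu > 0" shows "sqrt (sqrt (r / nu)) = r powr (1/4) / nu powr (1/4)"
proof -
  have "sqrt (sqrt (r / nu)) = ((r / nu) powr (1/2)) powr (1/2)" using r nu by (simp add: powr_half_sqrt)
  also have "\<dots> = (r / nu) powr (1/2 * (1/2))" by (simp add: powr_powr)
  also have "\<dots> = r powr (1/4) / nu powr (1/4)" using r nu by (simp add: powr_divide)
  finally show ?thesis .
qed
lemma t4:
  fixes s nu r eps :: real
  assumes s: "s > 0" and nu: "nu > 0" and r: "r > 0" and ea: "\<bar>eps\<bar> = 1"
  shows "r powr (-1/4) * exp (- r) / sqrt \<bar>(s powr (-3/4))\<^sup>2 / (4 * eps) * sqrt (r / nu)\<bar>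
     = 2 * s powr (3/4) * nu powr (1/4) * (r powr (1/2 - 1) * exp (- r))"
proof -
  have "\<bar>(s powr (-3/4))\<^sup>2 / (4 * eps) * sqrt (r / nu)\<bar> = s powr (-3/2) / 4 * sqrt (r / nu)"
    using r s nu ea t1[OF s] by (simp add: abs_mult)
  then have "sqrt \<bar>(s powr (-3/4))\<^sup>2 / (4 * eps) * sqrt (r / nu)\<bar> = sqrt (s powr (-3/2)) / 2 * sqrt (sqrt (r / nu))"
    by (simp add: real_sqrt_mult real_sqrt_divide)
  also have "\<dots> = s powr (-3/4) / 2 * (r powr (1/4) / nu powr (1/4))" using t2[OF s] t3[OF r nu] by simp
  finally have sb: "sqrt \<bar>(s powr (-3/4))\<^sup>2 / (4 * eps) * sqrt (r / nu)\<bar> = s powr (-3/4) / 2 * (r powr (1/4) / nu powr (1/4))" .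
  define S where "S = s powr (3/4)"
  define R where "R = r powr (1/4)"
  define N where "N = nu powr (1/4)"
  have p1: "s powr (-3/4) = 1 / S" unfolding S_def by (simp add: powr_minus_divide)
  have p2: "r powr (-1/4) = 1 / R" unfolding R_def by (simp add: powr_minus_divide)
  have p3: "r powr (1/2 - 1) = 1 / (R * R)"
  proof -
    have "r powr (1/2 - 1) = r powr (- (1/4 + 1/4))" by simp
    also have "\<dots> = 1 / (r powr (1/4 + 1/4))" by (rule powr_minus_divide)
    also have "r powr (1/4 + 1/4) = R * R" unfolding R_def by (rule powr_add)
    finally show ?thesis .
  qed
  have pos: "S > 0" "R > 0" "N > 0" using s r nu by (auto simp: S_def R_def N_def)
  have "r powr (-1/4) * exp (- r) / sqrt \<bar>(s powr (-3/4))\<^sup>2 / (4 * eps) * sqrt (r / nu)\<bar>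
     = r powr (-1/4) * exp (- r) / (s powr (-3/4) / 2 * (r powr (1/4) / nu powr (1/4)))"
    by (simp only: sb)
  also have "\<dots> = 2 * s powr (3/4) * nu powr (1/4) * (r powr (1/2 - 1) * exp (- r))"
    unfolding p1 p2 p3 S_def[symmetric] N_def[symmetric] R_def[symmetric]
    using pos by (simp add: field_simps)
  finally show ?thesis .
qed

lemma Kker_bound:
  fixes eps nu s x y :: real and F G :: "real \<times> real \<Rightarrow> real"
  assumes eps: "eps = 1 \<or> eps = -1" and nu: "nu > 0" and s: "s > 0"
    and iF: "integrable lborel F" and iG: "integrable lborel G" and Wk: "weak_dyy F G"
  shows "\<bar>\<integral>w. Kker eps nu (x - fst w) (y - snd w) s * F w \<partial>lborel\<bar>
     \<le> (20 * nu powr (1/4) * Gamma (1/2) / (4 * pi powr (3/2) * nu powr (3/4))) / sqrt s * (L1norm F + L1norm G)"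
proof -
  define P where "P = s powr (-5/4) * (1 / (4 * pi powr (3/2) * nu powr (3/4)))"
  define W where "W r = r powr (-1/4) * exp (- r)" for r :: real
  define a0 where "a0 r = s powr (-1/2) * sqrt (r / nu)" for r :: real
  define b where "b r = (s powr (-3/4))\<^sup>2 / (4 * eps) * sqrt (r / nu)" for r :: real
  define c0 where "c0 r = - (pi / 4 * eps)" for r :: real
  define M where "M = L1norm F + L1norm G"
  have M0: "0 \<le> M" using L1norm_nonneg[of F] L1norm_nonneg[of G] by (simp add: M_def)
  have e0: "eps \<noteq> 0" and ea: "\<bar>eps\<bar> = 1" using eps by auto
  have eq: "Kker eps nu (x - fst w) (y - snd w) s * F w
      = F w * (P * (LBINT r:{0<..}. W r * cos (a0 r * (x - fst w) + b r * (y - snd w)\<^sup>2 + c0 r)))" for w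
  proof -
    have "(\<lambda>r. r powr (-1/4) * exp (-r) * cos ((x - fst w) * s powr (-1/2) * sqrt (r / nu)
          + ((y - snd w) * s powr (-3/4))^2 / (4 * eps) * sqrt (r / nu) - pi / 4 * eps))
       = (\<lambda>r. W r * cos (a0 r * (x - fst w) + b r * (y - snd w)\<^sup>2 + c0 r))"
    proof (rule ext)
      fix r :: real
      have "(x - fst w) * s powr (-1/2) * sqrt (r / nu) + ((y - snd w) * s powr (-3/4))^2 / (4 * eps) * sqrt (r / nu) - pi / 4 * eps
          = a0 r * (x - fst w) + b r * (y - snd w)\<^sup>2 + c0 r"
        unfolding power_mult_distrib a0_def b_def c0_def by (simp add: algebra_simps)
      then show "r powr (-1/4) * exp (-r) * cos ((x - fst w) * s powr (-1/2) * sqrt (r / nu)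
          + ((y - snd w) * s powr (-3/4))^2 / (4 * eps) * sqrt (r / nu) - pi / 4 * eps)
         = W r * cos (a0 r * (x - fst w) + b r * (y - snd w)\<^sup>2 + c0 r)"
        unfolding W_def by simp
    qed
    then show ?thesis unfolding Kker_def Kstar_def P_def by (simp add: mult.commute mult.left_commute)
  qed
  have cont_sq: "continuous_on UNIV (\<lambda>r::real. sqrt (r / nu))" by (intro continuous_intros) (use nu in auto)
  have mW: "W \<in> borel_measurable lborel" unfolding W_def by measurable
  have ma: "a0 \<in> borel_measurable lborel" unfolding a0_def by (intro cont_meas continuous_intros cont_sq)
  have mb: "b \<in> borel_measurable lborel" unfolding b_def by (intro cont_meas continuous_intros cont_sq)
  have mc: "c0 \<in> borel_measurable lborel" unfolding c0_def by simp
  have b0: "b r \<noteq> 0" if "r > 0" for r using that e0 s nu by (simp add: b_def)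
  have iW: "integrable lborel (\<lambda>r. indicator {0<..} r * W r)"
    using Gamma_nn(2)[of "3/4"] unfolding W_def by simp
  have key: "ennreal \<bar>\<integral>w. F w * (P * (LBINT r:{0<..}. W r * cos (a0 r * (x - fst w) + b r * (y - snd w)\<^sup>2 + c0 r))) \<partial>lborel\<bar>
    \<le> ennreal (\<bar>P\<bar> * 10 * M) * (\<integral>\<^sup>+ r. ennreal (indicator {0<..} r * (\<bar>W r\<bar> / sqrt \<bar>b r\<bar>)) \<partial>lborel)"
    unfolding M_def by (rule fubini_bound[OF iF iG Wk mW ma mb mc b0 iW])
  define A where "A = 2 * s powr (3/4) * nu powr (1/4)"
  have A0: "A > 0" using s nu by (simp add: A_def)
  have wb: "indicator {0<..} r * (\<bar>W r\<bar> / sqrt \<bar>b r\<bar>) = A * (indicator {0<..} r * (r powr (1/2 - 1) * exp (- r)))" for r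
  proof (cases "r > 0")
    case True
    have "\<bar>W r\<bar> = r powr (-1/4) * exp (- r)" unfolding W_def by simp
    then have "\<bar>W r\<bar> / sqrt \<bar>b r\<bar> = A * (r powr (1/2 - 1) * exp (- r))"
      unfolding b_def A_def using t4[OF s nu True ea] by simp
    then show ?thesis using True by simp
  next
    case False
    then show ?thesis by simp
  qed
  have "(\<integral>\<^sup>+ r. ennreal (indicator {0<..} r * (\<bar>W r\<bar> / sqrt \<bar>b r\<bar>)) \<partial>lborel)
      = (\<integral>\<^sup>+ r. ennreal A * ennreal (indicator {0<..} r * (r powr (1/2 - 1) * exp (- r))) \<partial>lborel)"
    unfolding wb using A0 by (simp add: ennreal_mult)
  also have "\<dots> = ennreal A * (\<integral>\<^sup>+ r. ennreal (indicator {0<..} r * (r powr (1/2 - 1) * exp (- r))) \<partial>lborel)"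
    by (rule nn_integral_cmult) measurable
  also have "\<dots> \<le> ennreal A * ennreal (Gamma (1/2))"
    by (intro mult_left_mono Gamma_nn(1)) auto
  finally have I: "(\<integral>\<^sup>+ r. ennreal (indicator {0<..} r * (\<bar>W r\<bar> / sqrt \<bar>b r\<bar>)) \<partial>lborel) \<le> ennreal (A * Gamma (1/2))"
    using A0 by (simp add: ennreal_mult)
  have G0: "Gamma (1/2::real) > 0" by (rule Gamma_real_pos) simp
  have "ennreal \<bar>\<integral>w. Kker eps nu (x - fst w) (y - snd w) s * F w \<partial>lborel\<bar> \<le> ennreal (\<bar>P\<bar> * 10 * M) * ennreal (A * Gamma (1/2))"
    unfolding eq using order_trans[OF key mult_left_mono[OF I]] by simp
  also have "\<dots> = ennreal (\<bar>P\<bar> * 10 * M * (A * Gamma (1/2)))"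
    by (rule ennreal_mult[symmetric]) (use M0 A0 G0 in auto)
  finally have "\<bar>\<integral>w. Kker eps nu (x - fst w) (y - snd w) s * F w \<partial>lborel\<bar> \<le> \<bar>P\<bar> * 10 * M * (A * Gamma (1/2))"
    using M0 A0 G0 by (subst (asm) ennreal_le_iff) auto
  also have "\<dots> = (20 * nu powr (1/4) * Gamma (1/2) / (4 * pi powr (3/2) * nu powr (3/4))) * (s powr (-5/4) * s powr (3/4)) * M"
    unfolding P_def A_def using s nu by (simp add: field_simps)
  also have "s powr (-5/4) * s powr (3/4) = 1 / sqrt s"
  proof -
    have "s powr (-5/4) * s powr (3/4) = s powr (-5/4 + 3/4)" by (rule powr_add[symmetric])
    also have "\<dots> = s powr (- (1/2))" by simp
    also have "\<dots> = 1 / s powr (1/2)" by (rule powr_minus_divide)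
    also have "\<dots> = 1 / sqrt s" using s by (simp add: powr_half_sqrt)
    finally show ?thesis .
  qed
  finally show ?thesis unfolding M_def by simp
qed

lemma sing_int:
  fixes a t :: real assumes at: "a < t"
  shows "(\<integral>\<^sup>+ \<tau>. ennreal (indicator {a..t} \<tau> * (t - \<tau>) powr (-1/2)) \<partial>lborel) = ennreal (2 * sqrt (t - a))"
proof -
  define c where "c = t - a"
  have c: "c > 0" using at by (simp add: c_def)
  have h: "((\<lambda>x. x powr (-1/2)) has_integral (c powr (-1/2 + 1) / (-1/2 + 1))) {0..c}"
    by (rule has_integral_powr_from_0) (use c in auto)
  have nn: "(\<integral>\<^sup>+ x. ennreal (x powr (-1/2)) * indicator {0..c} x \<partial>lborel) = ennreal (c powr (-1/2 + 1) / (-1/2 + 1))"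
    by (rule nn_integral_has_integral_lebesgue'[OF _ h]) simp
  have "(\<integral>\<^sup>+ x. ennreal (x powr (-1/2)) * indicator {0..c} x \<partial>lborel)
      = ennreal \<bar>-1\<bar> * (\<integral>\<^sup>+ \<tau>. ennreal ((t + -1 * \<tau>) powr (-1/2)) * indicator {0..c} (t + -1 * \<tau>) \<partial>lborel)"
    by (rule nn_integral_real_affine) measurable
  also have "(\<integral>\<^sup>+ \<tau>. ennreal ((t + -1 * \<tau>) powr (-1/2)) * indicator {0..c} (t + -1 * \<tau>) \<partial>lborel)
      = (\<integral>\<^sup>+ \<tau>. ennreal (indicator {a..t} \<tau> * (t - \<tau>) powr (-1/2)) \<partial>lborel)"
    by (intro nn_integral_cong) (auto simp: indicator_def c_def)
  finally have "(\<integral>\<^sup>+ \<tau>. ennreal (indicator {a..t} \<tau> * (t - \<tau>) powr (-1/2)) \<partial>lborel) = ennreal (c powr (-1/2 + 1) / (-1/2 + 1))"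
    using nn by simp
  also have "c powr (-1/2 + 1) / (-1/2 + 1) = 2 * sqrt c" using c by (simp add: powr_half_sqrt)
  finally show ?thesis unfolding c_def .
qed

lemma duhamel_bound:
  fixes Ker :: "real \<Rightarrow> real \<Rightarrow> real \<Rightarrow> real" and f g :: "real \<Rightarrow> real \<times> real \<Rightarrow> real"
    and a t C0 Ms :: real and z :: "real \<times> real"
  assumes a: "0 < a" "a < t"
    and kb: "\<And>s F G x y. s > 0 \<Longrightarrow> integrable lborel F \<Longrightarrow> integrable lborel G \<Longrightarrow> weak_dyy F G \<Longrightarrow>
        \<bar>\<integral>w. Ker (x - fst w) (y - snd w) s * F w \<partial>lborel\<bar> \<le> C0 / sqrt s * (L1norm F + L1norm G)"
    and k0: "\<And>X Y. Ker X Y 0 = 0"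
    and C0: "C0 \<ge> 0"
    and fi: "\<And>\<tau>. \<tau> > 0 \<Longrightarrow> integrable lborel (f \<tau>)"
    and gi: "\<And>\<tau>. \<tau> > 0 \<Longrightarrow> integrable lborel (g \<tau>)"
    and wk: "\<And>\<tau>. \<tau> > 0 \<Longrightarrow> weak_dyy (f \<tau>) (g \<tau>)"
    and Mb: "\<And>\<tau>. \<tau> \<in> {a..t} \<Longrightarrow> L1norm (f \<tau>) + L1norm (g \<tau>) \<le> Ms"
  shows "\<bar>duhamel Ker f a t z\<bar> \<le> 2 * C0 * sqrt t * Ms"
proof -
  have Ms0: "0 \<le> Ms" using Mb[of a] a L1norm_nonneg[of "f a"] L1norm_nonneg[of "g a"] by auto
  define I where "I \<tau> = (\<integral>w. Ker (fst z - fst w) (snd z - snd w) (t - \<tau>) * f \<tau> w \<partial>lborel)" for \<tau>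
  have Ib: "\<bar>indicator {a..t} \<tau> * I \<tau>\<bar> \<le> C0 * Ms * (indicator {a..t} \<tau> * (t - \<tau>) powr (-1/2))" for \<tau>
  proof (cases "\<tau> \<in> {a..<t}")
    case True
    then have s: "t - \<tau> > 0" and tp: "\<tau> > 0" using a by auto
    have "\<bar>I \<tau>\<bar> \<le> C0 / sqrt (t - \<tau>) * (L1norm (f \<tau>) + L1norm (g \<tau>))"
      unfolding I_def by (rule kb[OF s fi[OF tp] gi[OF tp] wk[OF tp]])
    also have "\<dots> \<le> C0 / sqrt (t - \<tau>) * Ms"
      using Mb[of \<tau>] True C0 by (intro mult_left_mono) auto
    also have "\<dots> = C0 * Ms * (t - \<tau>) powr (-1/2)"
      using s by (simp add: powr_minus_divide powr_half_sqrt)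
    finally show ?thesis using True by simp
  next
    case False
    show ?thesis
    proof (cases "\<tau> = t")
      case True
      then show ?thesis unfolding I_def by (simp add: k0)
    next
      case False
      then have "\<tau> \<notin> {a..t}" using \<open>\<tau> \<notin> {a..<t}\<close> by auto
      then show ?thesis by simp
    qed
  qed
  have "duhamel Ker f a t z = (\<integral>\<tau>. indicator {a..t} \<tau> * I \<tau> \<partial>lborel)"
    unfolding duhamel_def I_def set_lebesgue_integral_def by simp
  moreover have "ennreal \<bar>\<integral>\<tau>. indicator {a..t} \<tau> * I \<tau> \<partial>lborel\<bar> \<le> ennreal (C0 * Ms) * ennreal (2 * sqrt (t - a))"
  proof (cases "integrable lborel (\<lambda>\<tau>. indicator {a..t} \<tau> * I \<tau>)")
    case True
    have "ennreal \<bar>\<integral>\<tau>. indicator {a..t} \<tau> * I \<tau> \<partial>lborel\<bar> \<le> (\<integral>\<^sup>+ \<tau>. ennreal (norm (indicator {a..t} \<tau> * I \<tau>)) \<partial>lborel)"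
      using integral_norm_bound_ennreal[OF True] by simp
    also have "\<dots> \<le> (\<integral>\<^sup>+ \<tau>. ennreal (C0 * Ms) * ennreal (indicator {a..t} \<tau> * (t - \<tau>) powr (-1/2)) \<partial>lborel)"
      using Ib C0 Ms0 by (intro nn_integral_mono) (simp add: ennreal_mult[symmetric])
    also have "\<dots> = ennreal (C0 * Ms) * (\<integral>\<^sup>+ \<tau>. ennreal (indicator {a..t} \<tau> * (t - \<tau>) powr (-1/2)) \<partial>lborel)"
      by (rule nn_integral_cmult) measurable
    also have "\<dots> = ennreal (C0 * Ms) * ennreal (2 * sqrt (t - a))" using sing_int[OF a(2)] by simp
    finally show ?thesis .
  next
    case False
    then show ?thesis by (simp add: not_integrable_integral_eq)
  qed
  ultimately have "ennreal \<bar>duhamel Ker f a t z\<bar> \<le> ennreal (C0 * Ms * (2 * sqrt (t - a)))"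
    using C0 Ms0 a by (simp add: ennreal_mult)
  then have "\<bar>duhamel Ker f a t z\<bar> \<le> C0 * Ms * (2 * sqrt (t - a))"
    using C0 Ms0 a by (subst (asm) ennreal_le_iff) auto
  also have "\<dots> \<le> C0 * Ms * (2 * sqrt t)"
    using C0 Ms0 a by (intro mult_left_mono) auto
  finally show ?thesis by (simp add: algebra_simps)
qed

lemma L1_tri:
  assumes "integrable lborel u" "integrable lborel v"
  shows "\<bar>L1norm u - L1norm v\<bar> \<le> L1norm (\<lambda>z. u z - v z)"
proof -
  have iu: "integrable lborel (\<lambda>z. \<bar>u z\<bar>)" and iv: "integrable lborel (\<lambda>z. \<bar>v z\<bar>)"
    and iuv: "integrable lborel (\<lambda>z. \<bar>u z - v z\<bar>)" using assms by auto
  have "L1norm u - L1norm v = (\<integral>z. \<bar>u z\<bar> - \<bar>v z\<bar> \<partial>lborel)"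
    unfolding L1norm_def by (rule Bochner_Integration.integral_diff[OF iu iv, symmetric])
  also have "\<dots> \<le> (\<integral>z. \<bar>u z - v z\<bar> \<partial>lborel)"
    by (intro integral_mono Bochner_Integration.integrable_diff iu iv iuv) auto
  finally have 1: "L1norm u - L1norm v \<le> L1norm (\<lambda>z. u z - v z)" unfolding L1norm_def .
  have "L1norm v - L1norm u = (\<integral>z. \<bar>v z\<bar> - \<bar>u z\<bar> \<partial>lborel)"
    unfolding L1norm_def by (rule Bochner_Integration.integral_diff[OF iv iu, symmetric])
  also have "\<dots> \<le> (\<integral>z. \<bar>u z - v z\<bar> \<partial>lborel)"
    by (intro integral_mono Bochner_Integration.integrable_diff iu iv iuv) auto
  finally have 2: "L1norm v - L1norm u \<le> L1norm (\<lambda>z. u z - v z)" unfolding L1norm_def .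
  show ?thesis using 1 2 by linarith
qed

lemma L1_cont_continuous:
  assumes f: "L1_cont f" and a: "0 < a"
  shows "continuous_on {a..t} (\<lambda>\<tau>. L1norm (f \<tau>))"
  unfolding continuous_on_def
proof
  fix \<tau>0 assume t0: "\<tau>0 \<in> {a..t}"
  then have p0: "\<tau>0 > 0" using a by auto
  have fi: "\<And>\<tau>. \<tau> > 0 \<Longrightarrow> integrable lborel (f \<tau>)" using f unfolding L1_cont_def by auto
  have lim: "((\<lambda>\<tau>. L1norm (\<lambda>z. f \<tau> z - f \<tau>0 z)) \<longlongrightarrow> 0) (at \<tau>0 within {0<..})"
    using f p0 unfolding L1_cont_def by auto
  have lim2: "((\<lambda>\<tau>. L1norm (\<lambda>z. f \<tau> z - f \<tau>0 z)) \<longlongrightarrow> 0) (at \<tau>0 within {a..t})"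
    by (rule tendsto_within_subset[OF lim]) (use a in auto)
  have "((\<lambda>\<tau>. L1norm (f \<tau>) - L1norm (f \<tau>0)) \<longlongrightarrow> 0) (at \<tau>0 within {a..t})"
  proof (rule Lim_null_comparison[OF _ lim2])
    show "\<forall>\<^sub>F \<tau> in at \<tau>0 within {a..t}. norm (L1norm (f \<tau>) - L1norm (f \<tau>0)) \<le> L1norm (\<lambda>z. f \<tau> z - f \<tau>0 z)"
      unfolding eventually_at_filter
      by (rule always_eventually) (use a p0 fi L1_tri in auto)
  qed
  then show "((\<lambda>\<tau>. L1norm (f \<tau>)) \<longlongrightarrow> L1norm (f \<tau>0)) (at \<tau>0 within {a..t})"
    by (simp add: LIM_zero_iff)
qed

lemma L1_bdd:
  assumes f: "L1_cont f" and g: "L1_cont g" and a: "0 < a"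
  shows "bdd_above ((\<lambda>\<tau>. L1norm (f \<tau>) + L1norm (g \<tau>)) ` {a..t})"
proof -
  have "continuous_on {a..t} (\<lambda>\<tau>. L1norm (f \<tau>) + L1norm (g \<tau>))"
    by (intro continuous_on_add L1_cont_continuous f g a)
  then have "compact ((\<lambda>\<tau>. L1norm (f \<tau>) + L1norm (g \<tau>)) ` {a..t})"
    by (rule compact_continuous_image) simp
  then show ?thesis by (intro bounded_imp_bdd_above compact_imp_bounded)
qed

theorem lemma3p5:
  fixes eps nu :: real
  assumes "eps = 1 \<or> eps = -1" and "nu > 0"
  shows "\<exists>C>0. \<forall>a t (f :: real \<Rightarrow> real \<times> real \<Rightarrow> real) (g :: real \<Rightarrow> real \<times> real \<Rightarrow> real).
           0 < a \<longrightarrow> a < t \<longrightarrow> L1_cont f \<longrightarrow> L1_cont g \<longrightarrow>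
           (\<forall>\<tau>>0. weak_dyy (f \<tau>) (g \<tau>)) \<longrightarrow>
           (AE z in lborel. \<bar>duhamel (Sker eps nu) f a t z\<bar>
               \<le> C * sqrt t * (SUP \<tau>\<in>{a..t}. L1norm (f \<tau>) + L1norm (g \<tau>))) \<and>
           (AE z in lborel. \<bar>duhamel (Kker eps nu) f a t z\<bar>
               \<le> C * sqrt t * (SUP \<tau>\<in>{a..t}. L1norm (f \<tau>) + L1norm (g \<tau>)))"
proof -
  note eps = assms(1) and nu = assms(2)
  define CS where "CS = 10 * sqrt (pi / nu) / (2 * pi powr (3/2))"
  define CK where "CK = 20 * nu powr (1/4) * Gamma (1/2) / (4 * pi powr (3/2) * nu powr (3/4))"
  define C0 where "C0 = max CS CK"
  have CS0: "CS > 0" unfolding CS_def using nu by simp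
  have C00: "C0 > 0" unfolding C0_def using CS0 by simp
  have kS: "\<bar>\<integral>w. Sker eps nu (x - fst w) (y - snd w) s * F w \<partial>lborel\<bar> \<le> C0 / sqrt s * (L1norm F + L1norm G)"
    if "s > 0" "integrable lborel F" "integrable lborel G" "weak_dyy F G" for s F G x y
  proof -
    have "\<bar>\<integral>w. Sker eps nu (x - fst w) (y - snd w) s * F w \<partial>lborel\<bar> \<le> CS / sqrt s * (L1norm F + L1norm G)"
      unfolding CS_def by (rule Sker_bound[OF eps nu that])
    also have "\<dots> \<le> C0 / sqrt s * (L1norm F + L1norm G)"
      using L1norm_nonneg[of F] L1norm_nonneg[of G] that(1)
      by (intro mult_right_mono divide_right_mono) (auto simp: C0_def)
    finally show ?thesis .
  qed
  have kK: "\<bar>\<integral>w. Kker eps nu (x - fst w) (y - snd w) s * F w \<partial>lborel\<bar> \<le> C0 / sqrt s * (L1norm F + L1norm G)"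
    if "s > 0" "integrable lborel F" "integrable lborel G" "weak_dyy F G" for s F G x y
  proof -
    have "\<bar>\<integral>w. Kker eps nu (x - fst w) (y - snd w) s * F w \<partial>lborel\<bar> \<le> CK / sqrt s * (L1norm F + L1norm G)"
      unfolding CK_def by (rule Kker_bound[OF eps nu that])
    also have "\<dots> \<le> C0 / sqrt s * (L1norm F + L1norm G)"
      using L1norm_nonneg[of F] L1norm_nonneg[of G] that(1)
      by (intro mult_right_mono divide_right_mono) (auto simp: C0_def)
    finally show ?thesis .
  qed
  have S0: "Sker eps nu X Y 0 = 0" for X Y by (simp add: Sker_def)
  have K0: "Kker eps nu X Y 0 = 0" for X Y by (simp add: Kker_def)
  show ?thesis
  proof (intro exI[of _ "2 * C0"] conjI allI impI)
    show "0 < 2 * C0" using C00 by simp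
    fix a t :: real and f g :: "real \<Rightarrow> real \<times> real \<Rightarrow> real"
    assume a0: "0 < a" and at: "a < t" and fc: "L1_cont f" and gc: "L1_cont g"
      and wk: "\<forall>\<tau>>0. weak_dyy (f \<tau>) (g \<tau>)"
    have fi: "\<And>\<tau>. \<tau> > 0 \<Longrightarrow> integrable lborel (f \<tau>)" using fc unfolding L1_cont_def by auto
    have gi: "\<And>\<tau>. \<tau> > 0 \<Longrightarrow> integrable lborel (g \<tau>)" using gc unfolding L1_cont_def by auto
    have wk': "\<And>\<tau>. \<tau> > 0 \<Longrightarrow> weak_dyy (f \<tau>) (g \<tau>)" using wk by auto
    have Mb: "L1norm (f \<tau>) + L1norm (g \<tau>) \<le> (SUP \<tau>\<in>{a..t}. L1norm (f \<tau>) + L1norm (g \<tau>))" if "\<tau> \<in> {a..t}" for \<tau>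
      by (rule cSUP_upper[OF that L1_bdd[OF fc gc a0]])
    show "AE z in lborel. \<bar>duhamel (Sker eps nu) f a t z\<bar> \<le> 2 * C0 * sqrt t * (SUP \<tau>\<in>{a..t}. L1norm (f \<tau>) + L1norm (g \<tau>))"
      by (rule AE_I2, rule duhamel_bound[OF a0 at kS S0 _ fi gi wk' Mb]) (use C00 in auto)
    show "AE z in lborel. \<bar>duhamel (Kker eps nu) f a t z\<bar> \<le> 2 * C0 * sqrt t * (SUP \<tau>\<in>{a..t}. L1norm (f \<tau>) + L1norm (g \<tau>))"
      by (rule AE_I2, rule duhamel_bound[OF a0 at kK K0 _ fi gi wk' Mb]) (use C00 in auto)
  qed
qed

end
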